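(* Consider a finite MDP with state space $\mathcal S$, action space $\mathcal A$, transition kernel $P$, deterministic reward function $r(s,a,s')$, discount $\gamma\in[0,1)$ and optimal Q-function $Q^*$. Let $\beta>0$. Let $(s_k,a_k,s_k')_{k\ge0}$ be i.i.d. triples where $s_k\sim p$ for a fixed state distribution $p$, $a_k\sim b(\cdot\mid s_k)$ for a fixed behavior policy $b$, $s_k'\sim P(\cdot\mid s_k,a_k)$, and assume $d(s,a):=p(s)b(a\mid s)>0$ for all $(s,a)$. Let $Q^A_0,Q^B_0$ be arbitrary and define (SGT2-QL) $$Q^A_{k+1}(s_k,a_k)=Q^A_k(s_k,a_k)+\alpha_k\Big(r(s_k,a_k,s_k')+\gamma\max_{a}Q^B_k(s_k',a)-Q^A_k(s_k,a_k)+\beta\big(Q^B_k(s_k,a_k)-Q^A_k(s_k,a_k)\big)\Big),$$ $$Q^B_{k+1}(s_k,a_k)=Q^B_k(s_k,a_k)+\alpha_k\Big(r(s_k,a_k,s_k')+\gamma\max_{a}Q^A_k(s_k',a)-Q^B_k(s_k,a_k)+\beta\big(Q^A_k(s_k,a_k)-Q^B_k(s_k,a_k)\big)\Big),$$ with all other entries unchanged. If $0\le\alpha_k\le1$, $\sum_k\alpha_k=\infty$ and $\sum_k\alpha_k^2<\infty$, then $Q^A_k\to Q^*$ and $Q^B_k\to Q^*$ with probability one.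
   Context: $Q^*$ is the unique solution of $Q^*(s,a)=\sum_{s'}P(s'\mid s,a)\big(r(s,a,s')+\gamma\max_{a'}Q^*(s',a')\big)$. There are no terminal states. *)

theory Defs
  imports "HOL-Probability.Probability"
begin

type_synonym ('s,'a) qfun = "'s \<Rightarrow> 'a \<Rightarrow> real"

definition Qstar :: "('s::finite \<Rightarrow> 'a::finite \<Rightarrow> 's pmf) \<Rightarrow> ('s \<Rightarrow> 'a \<Rightarrow> 's \<Rightarrow> real) \<Rightarrow> real \<Rightarrow> ('s,'a) qfun" where
  "Qstar P r \<gamma> = (THE Q. \<forall>s a. Q s a =
      (\<Sum>s'\<in>UNIV. pmf (P s a) s' * (r s a s' + \<gamma> * Max (range (Q s')))))"

definition sample_pmf :: "'s pmf \<Rightarrow> ('s \<Rightarrow> 'a pmf) \<Rightarrow> ('s \<Rightarrow> 'a \<Rightarrow> 's pmf) \<Rightarrow> ('s \<times> 'a \<times> 's) pmf" where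
  "sample_pmf p b P = do { s \<leftarrow> p; a \<leftarrow> b s; s' \<leftarrow> P s a; return_pmf (s, a, s') }"

fun sgt2 :: "('s \<Rightarrow> 'a \<Rightarrow> 's \<Rightarrow> real) \<Rightarrow> real \<Rightarrow> real \<Rightarrow> (nat \<Rightarrow> real) \<Rightarrow>
    (nat \<Rightarrow> 's \<times> 'a \<times> 's) \<Rightarrow> ('s::finite,'a::finite) qfun \<Rightarrow> ('s,'a) qfun \<Rightarrow> nat
    \<Rightarrow> ('s,'a) qfun \<times> ('s,'a) qfun" where
  "sgt2 r \<gamma> \<beta> \<alpha> xs QA0 QB0 0 = (QA0, QB0)"
| "sgt2 r \<gamma> \<beta> \<alpha> xs QA0 QB0 (Suc k) =
    (let (QA, QB) = sgt2 r \<gamma> \<beta> \<alpha> xs QA0 QB0 k;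
         (s, a, s') = xs k;
         vA = QA s a + \<alpha> k * (r s a s' + \<gamma> * Max (range (QB s')) - QA s a
                                 + \<beta> * (QB s a - QA s a));
         vB = QB s a + \<alpha> k * (r s a s' + \<gamma> * Max (range (QA s')) - QB s a
                                 + \<beta> * (QA s a - QB s a))
     in (QA(s := (QA s)(a := vA)), QB(s := (QB s)(a := vB))))"

end

theory Submission
  imports Defs
begin

lemma disc_meas:
  fixes g :: "(nat \<Rightarrow> 'x::finite) \<Rightarrow> real"
  assumes "finite I"
  shows "g \<in> borel_measurable (PiM I (\<lambda>_. count_space (UNIV::'x set)))"
proof (rule measurable_discrete_difference[where f="\<lambda>_. 0" and X="space (PiM I (\<lambda>_. count_space (UNIV::'x set)))"])
  show "countable (space (PiM I (\<lambda>_. count_space (UNIV::'x set))))"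
    using assms by (auto simp: space_PiM intro!: countable_finite finite_PiE)
  fix x assume x: "x \<in> space (PiM I (\<lambda>_. count_space (UNIV::'x set)))"
  have "{x} = PiE I (\<lambda>l. {x l})" using x by (auto simp: space_PiM PiE_iff extensional_def fun_eq_iff) metis
  also have "\<dots> \<in> sets (PiM I (\<lambda>_. count_space (UNIV::'x set)))"
    using assms by (intro sets_PiM_I_countable) (auto intro: countable_finite)
  finally show "{x} \<in> sets (PiM I (\<lambda>_. count_space (UNIV::'x set)))" .
qed auto

lemma (in prob_space) orth:
  fixes X :: "nat \<Rightarrow> 'a \<Rightarrow> 'x::finite" and g :: "(nat \<Rightarrow> 'x) \<Rightarrow> real" and h :: "'x \<Rightarrow> real"
  assumes meas: "\<And>k. X k \<in> measurable M (count_space UNIV)"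
    and indep: "indep_vars (\<lambda>_. count_space UNIV) X UNIV"
    and gb: "\<And>f. \<bar>g f\<bar> \<le> C"
  shows "(\<integral>\<omega>. g (\<lambda>l\<in>{..<i}. X l \<omega>) * h (X i \<omega>) \<partial>M)
       = (\<integral>\<omega>. g (\<lambda>l\<in>{..<i}. X l \<omega>) \<partial>M) * (\<integral>\<omega>. h (X i \<omega>) \<partial>M)"
proof -
  have iv: "indep_var (PiM {..<i} (\<lambda>_. count_space UNIV)) (\<lambda>\<omega>. \<lambda>l\<in>{..<i}. X l \<omega>)
                      (PiM {i} (\<lambda>_. count_space UNIV)) (\<lambda>\<omega>. \<lambda>l\<in>{i}. X l \<omega>)"
    by (rule indep_var_restrict[OF indep]) auto
  have iv2: "indep_var borel (g \<circ> (\<lambda>\<omega>. \<lambda>l\<in>{..<i}. X l \<omega>)) borel ((\<lambda>f. h (f i)) \<circ> (\<lambda>\<omega>. \<lambda>l\<in>{i}. X l \<omega>))"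
    by (rule indep_var_compose[OF iv disc_meas[of "{..<i}" g] disc_meas[of "{i}" "\<lambda>f. h (f i)"]]) auto
  have m1: "(\<lambda>\<omega>. \<lambda>l\<in>{..<i}. X l \<omega>) \<in> measurable M (PiM {..<i} (\<lambda>_. count_space UNIV))"
    by (intro measurable_restrict meas)
  have int1: "integrable M (\<lambda>\<omega>. g (\<lambda>l\<in>{..<i}. X l \<omega>))"
    by (rule integrable_const_bound[where B=C]) (auto simp: gb intro!: measurable_compose[OF m1 disc_meas])
  have int2: "integrable M (\<lambda>\<omega>. h (X i \<omega>))"
    by (rule integrable_const_bound[where B="Max (range (\<lambda>x. \<bar>h x\<bar>))"]) (auto intro!: measurable_compose[OF meas])
  show ?thesis
    using indep_var_lebesgue_integral[OF iv2] int1 int2 by (simp add: comp_def)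
qed

locale kseq = prob_space +
  fixes X :: "nat \<Rightarrow> 'a \<Rightarrow> 'x::finite" and \<phi> :: "nat \<Rightarrow> 'x \<Rightarrow> real" and c :: "nat \<Rightarrow> real"
  assumes meas: "\<And>k. X k \<in> measurable M (count_space UNIV)"
    and indep: "indep_vars (\<lambda>_. count_space UNIV) X UNIV"
    and bnd: "\<And>k x. \<bar>\<phi> k x\<bar> \<le> c k"
    and mean0: "\<And>k. (\<integral>\<omega>. \<phi> k (X k \<omega>) \<partial>M) = 0"
begin

definition Z :: "nat \<Rightarrow> 'a \<Rightarrow> real" where "Z k \<omega> = \<phi> k (X k \<omega>)"
definition T :: "nat \<Rightarrow> nat \<Rightarrow> 'a \<Rightarrow> real" where "T N k \<omega> = (\<Sum>i\<in>{N..<k}. Z i \<omega>)"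
definition Tf :: "nat \<Rightarrow> nat \<Rightarrow> (nat \<Rightarrow> 'x) \<Rightarrow> real" where "Tf N k f = (\<Sum>i\<in>{N..<k}. \<phi> i (f i))"

lemma sq_le: "\<bar>x::real\<bar> \<le> y \<Longrightarrow> x\<^sup>2 \<le> y\<^sup>2"
  by (metis abs_ge_zero power2_abs power_mono)

lemma c_nonneg: "0 \<le> c k" using bnd[of k undefined] by linarith

lemma Z_meas[measurable]: "Z k \<in> borel_measurable M"
  unfolding Z_def by (rule measurable_compose[OF meas]) auto

lemma T_meas[measurable]: "T N k \<in> borel_measurable M"
  unfolding T_def by measurable

lemma restr_meas: "(\<lambda>\<omega>. g (\<lambda>l\<in>{..<i}. X l \<omega>) :: real) \<in> borel_measurable M"
  by (rule measurable_compose[OF measurable_restrict disc_meas]) (auto intro: meas)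

lemma Tf_restr: "k \<le> m \<Longrightarrow> Tf N k (\<lambda>l\<in>{..<m}. X l \<omega>) = T N k \<omega>"
  unfolding Tf_def T_def Z_def by (intro sum.cong) auto

lemma Tf_bound: "\<bar>Tf N k f\<bar> \<le> (\<Sum>i<k. c i)"
proof -
  have "\<bar>Tf N k f\<bar> \<le> (\<Sum>i\<in>{N..<k}. \<bar>\<phi> i (f i)\<bar>)" unfolding Tf_def by (rule sum_abs)
  also have "\<dots> \<le> (\<Sum>i\<in>{N..<k}. c i)" by (intro sum_mono bnd)
  also have "\<dots> \<le> (\<Sum>i<k. c i)" by (intro sum_mono2) (auto simp: c_nonneg)
  finally show ?thesis .
qed

lemma T_bound: "\<bar>T N k \<omega>\<bar> \<le> (\<Sum>i<k. c i)"
  using Tf_bound[of N k "\<lambda>l\<in>{..<k}. X l \<omega>"] Tf_restr[of k k N \<omega>] by simp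

lemma Z_bound: "\<bar>Z k \<omega>\<bar> \<le> c k" unfolding Z_def by (rule bnd)

lemma int_bounded: fixes f :: "'a \<Rightarrow> real" shows "f \<in> borel_measurable M \<Longrightarrow> (\<And>\<omega>. \<bar>f \<omega>\<bar> \<le> B) \<Longrightarrow> integrable M f"
  by (rule integrable_const_bound[where B=B]) auto

lemma orthZ:
  assumes "\<And>f. \<bar>g f\<bar> \<le> C"
  shows "(\<integral>\<omega>. g (\<lambda>l\<in>{..<i}. X l \<omega>) * Z i \<omega> \<partial>M) = 0"
  using orth[OF meas indep assms, where i=i and h="\<phi> i"] mean0[of i] by (simp add: Z_def)

lemma expand:
  fixes g :: "(nat \<Rightarrow> 'x) \<Rightarrow> real"
  assumes gb: "\<And>f. \<bar>g f\<bar> \<le> C" and km: "k \<le> m" and Nm: "N \<le> m"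
  shows "(\<integral>\<omega>. g (\<lambda>l\<in>{..<k}. X l \<omega>) * (T N (Suc m) \<omega>)\<^sup>2 \<partial>M)
       = (\<integral>\<omega>. g (\<lambda>l\<in>{..<k}. X l \<omega>) * (T N m \<omega>)\<^sup>2 \<partial>M)
         + 2 * (\<integral>\<omega>. g (\<lambda>l\<in>{..<k}. X l \<omega>) * T N m \<omega> * Z m \<omega> \<partial>M)
         + (\<integral>\<omega>. g (\<lambda>l\<in>{..<k}. X l \<omega>) * (Z m \<omega>)\<^sup>2 \<partial>M)"
proof -
  let ?G = "\<lambda>\<omega>. g (\<lambda>l\<in>{..<k}. X l \<omega>)"
  have Gm[measurable]: "?G \<in> borel_measurable M" by (rule restr_meas)
  have C0: "0 \<le> C" using gb[of undefined] by linarith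
  have Ts: "T N (Suc m) \<omega> = T N m \<omega> + Z m \<omega>" for \<omega>
    using Nm unfolding T_def by simp
  have eq: "?G \<omega> * (T N (Suc m) \<omega>)\<^sup>2 = ?G \<omega> * (T N m \<omega>)\<^sup>2 + 2 * (?G \<omega> * T N m \<omega> * Z m \<omega>) + ?G \<omega> * (Z m \<omega>)\<^sup>2" for \<omega>
    unfolding Ts by (simp add: power2_eq_square algebra_simps)
  have i1: "integrable M (\<lambda>\<omega>. ?G \<omega> * (T N m \<omega>)\<^sup>2)"
    apply (rule int_bounded[where B="C * (\<Sum>i<m. c i)^2"], measurable)
    apply (simp add: abs_mult)
    apply (rule mult_mono[OF gb])
    using T_bound[of N m] by (auto intro: sq_le simp: C0)
  have i2: "integrable M (\<lambda>\<omega>. ?G \<omega> * T N m \<omega> * Z m \<omega>)"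
    apply (rule int_bounded[where B="C * (\<Sum>i<m. c i) * c m"], measurable)
    apply (simp add: abs_mult)
    apply (intro mult_mono gb T_bound Z_bound)
    by (auto simp: C0 c_nonneg sum_nonneg)
  have i3: "integrable M (\<lambda>\<omega>. ?G \<omega> * (Z m \<omega>)\<^sup>2)"
    apply (rule int_bounded[where B="C * (c m)^2"], measurable)
    apply (simp add: abs_mult)
    apply (rule mult_mono[OF gb])
    using Z_bound[of m] by (auto intro: sq_le simp: C0)
  show ?thesis
    unfolding eq using i1 i2 i3 by (simp add: integral_add)
qed

lemma cross0:
  fixes g :: "(nat \<Rightarrow> 'x) \<Rightarrow> real"
  assumes gb: "\<And>f. \<bar>g f\<bar> \<le> C" and km: "k \<le> m"
  shows "(\<integral>\<omega>. g (\<lambda>l\<in>{..<k}. X l \<omega>) * T N m \<omega> * Z m \<omega> \<partial>M) = 0"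
proof -
  let ?g = "\<lambda>f. g (restrict f {..<k}) * Tf N m f"
  have "(\<integral>\<omega>. ?g (\<lambda>l\<in>{..<m}. X l \<omega>) * Z m \<omega> \<partial>M) = 0"
  proof (rule orthZ)
    fix f show "\<bar>?g f\<bar> \<le> C * (\<Sum>i<m. c i)"
      unfolding abs_mult using gb[of undefined]
      by (intro mult_mono gb Tf_bound) (auto simp: sum_nonneg c_nonneg)
  qed
  moreover have "?g (\<lambda>l\<in>{..<m}. X l \<omega>) = g (\<lambda>l\<in>{..<k}. X l \<omega>) * T N m \<omega>" for \<omega>
  proof -
    have "restrict (\<lambda>l\<in>{..<m}. X l \<omega>) {..<k} = (\<lambda>l\<in>{..<k}. X l \<omega>)"
      using km by (auto simp: fun_eq_iff)
    then show ?thesis by (simp add: Tf_restr)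
  qed
  ultimately show ?thesis by simp
qed

end

lemma sq_le: "\<bar>x::real\<bar> \<le> y \<Longrightarrow> x\<^sup>2 \<le> y\<^sup>2"
  by (metis abs_ge_zero power2_abs power_mono)


lemma fp_sum:
  fixes t :: "nat \<Rightarrow> real"
  assumes "N \<le> n"
  shows "(\<Sum>k\<in>{N..n}. if \<epsilon> \<le> \<bar>t k\<bar> \<and> (\<forall>l\<in>{N..<k}. \<bar>t l\<bar> < \<epsilon>) then 1 else 0)
       = (if \<exists>k\<in>{N..n}. \<epsilon> \<le> \<bar>t k\<bar> then 1 else (0::real))"
  using assms
proof (induction n rule: dec_induct)
  case base then show ?case by auto
next
  case (step n)
  have sp: "{N..Suc n} = insert (Suc n) {N..n}" using step.hyps by auto
  show ?case
  proof (cases "\<exists>k\<in>{N..n}. \<epsilon> \<le> \<bar>t k\<bar>")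
    case True
    then have "\<not> (\<forall>l\<in>{N..<Suc n}. \<bar>t l\<bar> < \<epsilon>)"
    proof -
      from True obtain k where "k \<in> {N..n}" "\<epsilon> \<le> \<bar>t k\<bar>" by blast
      then show ?thesis by (intro notI) (drule bspec[of _ _ k], auto)
    qed
    then show ?thesis using True step.IH unfolding sp by auto
  next
    case False
    then have "(\<forall>l\<in>{N..<Suc n}. \<bar>t l\<bar> < \<epsilon>)"
      by (metis atLeastAtMost_iff atLeastLessThan_iff less_Suc_eq_le not_le)
    moreover have "(\<exists>k\<in>{N..Suc n}. \<epsilon> \<le> \<bar>t k\<bar>) = (\<epsilon> \<le> \<bar>t (Suc n)\<bar>)" using False unfolding sp by auto
    ultimately show ?thesis using False step.IH unfolding sp by auto
  qed
qed

lemma bnd_prod: "\<bar>a::real\<bar> \<le> 1 \<Longrightarrow> \<bar>x\<bar> \<le> y \<Longrightarrow> \<bar>a * x\<^sup>2\<bar> \<le> y\<^sup>2"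
proof -
  assume a: "\<bar>a\<bar> \<le> 1" and x: "\<bar>x\<bar> \<le> y"
  have "\<bar>a * x\<^sup>2\<bar> = \<bar>a\<bar> * x\<^sup>2" by (simp add: abs_mult)
  also have "\<dots> \<le> 1 * x\<^sup>2" by (intro mult_right_mono a) auto
  also have "\<dots> \<le> y\<^sup>2" using x by (simp add: sq_le)
  finally show ?thesis .
qed

context kseq begin

lemma sq_mono:
  fixes g :: "(nat \<Rightarrow> 'x) \<Rightarrow> real"
  assumes gb: "\<And>f. \<bar>g f\<bar> \<le> C" and g0: "\<And>f. 0 \<le> g f" and km: "k \<le> m" and Nk: "N \<le> k"
  shows "(\<integral>\<omega>. g (\<lambda>l\<in>{..<k}. X l \<omega>) * (T N k \<omega>)\<^sup>2 \<partial>M) \<le> (\<integral>\<omega>. g (\<lambda>l\<in>{..<k}. X l \<omega>) * (T N m \<omega>)\<^sup>2 \<partial>M)"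
  using km
proof (induction m rule: dec_induct)
  case base then show ?case by simp
next
  case (step m)
  have "(\<integral>\<omega>. g (\<lambda>l\<in>{..<k}. X l \<omega>) * (T N (Suc m) \<omega>)\<^sup>2 \<partial>M)
     = (\<integral>\<omega>. g (\<lambda>l\<in>{..<k}. X l \<omega>) * (T N m \<omega>)\<^sup>2 \<partial>M)
         + (\<integral>\<omega>. g (\<lambda>l\<in>{..<k}. X l \<omega>) * (Z m \<omega>)\<^sup>2 \<partial>M)"
    using expand[where g=g, OF gb step.hyps(1)] cross0[where g=g, OF gb step.hyps(1)] Nk step.hyps by simp
  moreover have "0 \<le> (\<integral>\<omega>. g (\<lambda>l\<in>{..<k}. X l \<omega>) * (Z m \<omega>)\<^sup>2 \<partial>M)"
    by (intro integral_nonneg_AE AE_I2 mult_nonneg_nonneg g0) auto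
  ultimately show ?case using step.IH by linarith
qed

lemma T_sq:
  assumes "N \<le> n"
  shows "(\<integral>\<omega>. (T N n \<omega>)\<^sup>2 \<partial>M) \<le> (\<Sum>i\<in>{N..<n}. (c i)\<^sup>2)"
  using assms
proof (induction n rule: dec_induct)
  case base then show ?case by (simp add: T_def)
next
  case (step m)
  have gb: "\<bar>(\<lambda>f::nat\<Rightarrow>'x. 1::real) f\<bar> \<le> 1" for f by simp
  have "(\<integral>\<omega>. (T N (Suc m) \<omega>)\<^sup>2 \<partial>M)
     = (\<integral>\<omega>. (T N m \<omega>)\<^sup>2 \<partial>M) + (\<integral>\<omega>. (Z m \<omega>)\<^sup>2 \<partial>M)"
    using expand[OF gb, of 0 m N] cross0[OF gb, of 0 m N] step.hyps by simp
  moreover have "(\<integral>\<omega>. (Z m \<omega>)\<^sup>2 \<partial>M) \<le> (\<integral>\<omega>. (c m)\<^sup>2 \<partial>M)"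
    apply (rule integral_mono)
    apply (rule int_bounded[where B="(c m)\<^sup>2"], measurable)
    using Z_bound[of m] by (auto intro: sq_le)
  ultimately show ?case using step.IH step.hyps by (simp add: prob_space)
qed

theorem kolm:
  assumes Nn: "N \<le> n" and e: "0 < \<epsilon>"
  shows "prob {\<omega>\<in>space M. \<exists>k\<in>{N..n}. \<epsilon> \<le> \<bar>T N k \<omega>\<bar>} \<le> (\<Sum>i\<in>{N..<n}. (c i)\<^sup>2) / \<epsilon>\<^sup>2"
proof -
  define gk where "gk k f = (if \<epsilon> \<le> \<bar>Tf N k f\<bar> \<and> (\<forall>l\<in>{N..<k}. \<bar>Tf N l f\<bar> < \<epsilon>) then 1 else (0::real))" for k f
  define E where "E = {\<omega>\<in>space M. \<exists>k\<in>{N..n}. \<epsilon> \<le> \<bar>T N k \<omega>\<bar>}"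
  have E_sets[measurable]: "E \<in> sets M" unfolding E_def by measurable
  have gkr: "gk k (\<lambda>l\<in>{..<k}. X l \<omega>) = (if \<epsilon> \<le> \<bar>T N k \<omega>\<bar> \<and> (\<forall>l\<in>{N..<k}. \<bar>T N l \<omega>\<bar> < \<epsilon>) then 1 else 0)" for k \<omega>
    unfolding gk_def by (simp add: Tf_restr)
  have gkb: "\<bar>gk k f\<bar> \<le> 1" "0 \<le> gk k f" "gk k f \<le> 1" for k f unfolding gk_def by auto
  have ind: "indicator E \<omega> = (\<Sum>k\<in>{N..n}. gk k (\<lambda>l\<in>{..<k}. X l \<omega>))" if "\<omega> \<in> space M" for \<omega>
    unfolding gkr fp_sum[OF Nn] using that by (auto simp: E_def)
  have gm[measurable]: "(\<lambda>\<omega>. gk k (\<lambda>l\<in>{..<k}. X l \<omega>)) \<in> borel_measurable M" for k by (rule restr_meas)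
  have int1: "integrable M (\<lambda>\<omega>. gk k (\<lambda>l\<in>{..<k}. X l \<omega>))" for k
    by (rule int_bounded[where B=1]) (auto simp: gkb)
  have int2: "integrable M (\<lambda>\<omega>. gk k (\<lambda>l\<in>{..<k}. X l \<omega>) * (T N n \<omega>)\<^sup>2)" for k
    by (rule int_bounded[where B="(\<Sum>i<n. c i)\<^sup>2"], measurable) (intro bnd_prod gkb T_bound)
  have int3: "integrable M (\<lambda>\<omega>. (T N n \<omega>)\<^sup>2)"
    apply (rule int_bounded[where B="(\<Sum>i<n. c i)\<^sup>2"], measurable)
    using T_bound[of N n] by (auto intro: sq_le)
  have "\<epsilon>\<^sup>2 * prob E = \<epsilon>\<^sup>2 * (\<integral>\<omega>. indicator E \<omega> \<partial>M)" by simp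
  also have "(\<integral>\<omega>. indicator E \<omega> \<partial>M) = (\<integral>\<omega>. (\<Sum>k\<in>{N..n}. gk k (\<lambda>l\<in>{..<k}. X l \<omega>)) \<partial>M)"
    by (rule Bochner_Integration.integral_cong[OF refl]) (auto simp: ind)
  also have "\<dots> = (\<Sum>k\<in>{N..n}. (\<integral>\<omega>. gk k (\<lambda>l\<in>{..<k}. X l \<omega>) \<partial>M))"
    by (rule Bochner_Integration.integral_sum) (auto intro: int1)
  also have "\<epsilon>\<^sup>2 * \<dots> = (\<Sum>k\<in>{N..n}. (\<integral>\<omega>. \<epsilon>\<^sup>2 * gk k (\<lambda>l\<in>{..<k}. X l \<omega>) \<partial>M))"
    by (simp add: sum_distrib_left)
  also have "\<dots> \<le> (\<Sum>k\<in>{N..n}. (\<integral>\<omega>. gk k (\<lambda>l\<in>{..<k}. X l \<omega>) * (T N n \<omega>)\<^sup>2 \<partial>M))"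
  proof (rule sum_mono)
    fix k assume k: "k \<in> {N..n}"
    have "(\<integral>\<omega>. \<epsilon>\<^sup>2 * gk k (\<lambda>l\<in>{..<k}. X l \<omega>) \<partial>M) \<le> (\<integral>\<omega>. gk k (\<lambda>l\<in>{..<k}. X l \<omega>) * (T N k \<omega>)\<^sup>2 \<partial>M)"
    proof (rule integral_mono)
      show "integrable M (\<lambda>\<omega>. \<epsilon>\<^sup>2 * gk k (\<lambda>l\<in>{..<k}. X l \<omega>))" using int1 by simp
      show "integrable M (\<lambda>\<omega>. gk k (\<lambda>l\<in>{..<k}. X l \<omega>) * (T N k \<omega>)\<^sup>2)"
        by (rule int_bounded[where B="(\<Sum>i<k. c i)\<^sup>2"], measurable) (intro bnd_prod gkb T_bound)
      fix \<omega> show "\<epsilon>\<^sup>2 * gk k (\<lambda>l\<in>{..<k}. X l \<omega>) \<le> gk k (\<lambda>l\<in>{..<k}. X l \<omega>) * (T N k \<omega>)\<^sup>2"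
        unfolding gkr using e by (auto simp: abs_le_square_iff[symmetric])
    qed
    also have "\<dots> \<le> (\<integral>\<omega>. gk k (\<lambda>l\<in>{..<k}. X l \<omega>) * (T N n \<omega>)\<^sup>2 \<partial>M)"
      using k by (intro sq_mono[where C=1] gkb) auto
    finally show "(\<integral>\<omega>. \<epsilon>\<^sup>2 * gk k (\<lambda>l\<in>{..<k}. X l \<omega>) \<partial>M) \<le> (\<integral>\<omega>. gk k (\<lambda>l\<in>{..<k}. X l \<omega>) * (T N n \<omega>)\<^sup>2 \<partial>M)" .
  qed
  also have "\<dots> = (\<integral>\<omega>. (\<Sum>k\<in>{N..n}. gk k (\<lambda>l\<in>{..<k}. X l \<omega>)) * (T N n \<omega>)\<^sup>2 \<partial>M)"
    by (subst Bochner_Integration.integral_sum[symmetric]) (auto intro: int2 simp: sum_distrib_right)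
  also have "\<dots> = (\<integral>\<omega>. indicator E \<omega> * (T N n \<omega>)\<^sup>2 \<partial>M)"
    by (rule Bochner_Integration.integral_cong[OF refl]) (auto simp: ind)
  also have "\<dots> \<le> (\<integral>\<omega>. (T N n \<omega>)\<^sup>2 \<partial>M)"
  proof (rule integral_mono)
    show "integrable M (\<lambda>\<omega>. indicator E \<omega> * (T N n \<omega>)\<^sup>2)"
      by (rule integrable_real_mult_indicator[OF E_sets int3, simplified mult.commute])
  qed (auto intro: int3 simp: indicator_def)
  also have "\<dots> \<le> (\<Sum>i\<in>{N..<n}. (c i)\<^sup>2)" by (rule T_sq[OF Nn])
  finally have "\<epsilon>\<^sup>2 * prob E \<le> (\<Sum>i\<in>{N..<n}. (c i)\<^sup>2)" .
  then show ?thesis unfolding E_def[symmetric] using e by (simp add: field_simps)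
qed

end

locale kseq2 = kseq +
  assumes sq: "summable (\<lambda>k. (c k)\<^sup>2)"
begin

definition tl :: "nat \<Rightarrow> real" where "tl N = (\<Sum>i. (c (i + N))\<^sup>2)"

lemma tl_bound: "(\<Sum>i\<in>{N..<n}. (c i)\<^sup>2) \<le> tl N"
proof -
  have "(\<Sum>i\<in>{N..<n}. (c i)\<^sup>2) = (\<Sum>i\<in>{0..<n-N}. (c (i + N))\<^sup>2)"
    by (subst sum.atLeastLessThan_shift_0) (simp add: comp_def add.commute)
  also have "\<dots> \<le> tl N" unfolding tl_def
    by (rule sum_le_suminf) (auto intro: summable_ignore_initial_segment[OF sq])
  finally show ?thesis .
qed

lemma tl_lim: "tl \<longlonglongrightarrow> 0"
  unfolding tl_def by (rule suminf_exist_split2[OF sq])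

lemma tail_event:
  assumes e: "0 < \<epsilon>"
  shows "prob {\<omega>\<in>space M. \<exists>k\<ge>N. \<epsilon> \<le> \<bar>T N k \<omega>\<bar>} \<le> tl N / \<epsilon>\<^sup>2"
proof -
  define A where "A n = {\<omega>\<in>space M. \<exists>k\<in>{N..N+n}. \<epsilon> \<le> \<bar>T N k \<omega>\<bar>}" for n
  have As: "range A \<subseteq> sets M" unfolding A_def by auto
  have inc: "incseq A" unfolding incseq_def A_def by (auto 0 3 intro: order_trans)
  have U: "(\<Union>n. A n) = {\<omega>\<in>space M. \<exists>k\<ge>N. \<epsilon> \<le> \<bar>T N k \<omega>\<bar>}"
  proof (intro equalityI subsetI)
    fix \<omega> assume "\<omega> \<in> (\<Union>n. A n)" then show "\<omega> \<in> {\<omega>\<in>space M. \<exists>k\<ge>N. \<epsilon> \<le> \<bar>T N k \<omega>\<bar>}"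
      unfolding A_def by auto
  next
    fix \<omega> assume "\<omega> \<in> {\<omega>\<in>space M. \<exists>k\<ge>N. \<epsilon> \<le> \<bar>T N k \<omega>\<bar>}"
    then obtain k where "\<omega> \<in> space M" "N \<le> k" "\<epsilon> \<le> \<bar>T N k \<omega>\<bar>" by auto
    then have "\<omega> \<in> A (k - N)" unfolding A_def by auto
    then show "\<omega> \<in> (\<Union>n. A n)" by blast
  qed
  have "(\<lambda>n. prob (A n)) \<longlonglongrightarrow> prob (\<Union>n. A n)"
    by (rule finite_Lim_measure_incseq[OF As inc])
  moreover have "prob (A n) \<le> tl N / \<epsilon>\<^sup>2" for n
  proof -
    have "prob (A n) \<le> (\<Sum>i\<in>{N..<N+n}. (c i)\<^sup>2) / \<epsilon>\<^sup>2" unfolding A_def by (rule kolm) (auto simp: e)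
    also have "\<dots> \<le> tl N / \<epsilon>\<^sup>2" by (intro divide_right_mono tl_bound) auto
    finally show ?thesis .
  qed
  ultimately show ?thesis unfolding U by (intro LIMSEQ_le_const2) auto
qed

definition B :: "nat \<Rightarrow> 'a set" where
  "B j = {\<omega>\<in>space M. \<forall>N. \<exists>k\<ge>N. 1 / real (Suc j) \<le> \<bar>T N k \<omega>\<bar>}"

lemma B_sets[measurable]: "B j \<in> sets M" unfolding B_def by measurable

lemma B_null: "B j \<in> null_sets M"
proof -
  let ?e = "1 / real (Suc j)"
  have "prob (B j) \<le> tl N / ?e\<^sup>2" for N
  proof -
    have "prob (B j) \<le> prob {\<omega>\<in>space M. \<exists>k\<ge>N. ?e \<le> \<bar>T N k \<omega>\<bar>}"
      by (rule finite_measure_mono) (auto simp: B_def)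
    also have "\<dots> \<le> tl N / ?e\<^sup>2" by (rule tail_event) auto
    finally show ?thesis .
  qed
  moreover have "(\<lambda>N. tl N / ?e\<^sup>2) \<longlonglongrightarrow> 0 / ?e\<^sup>2" by (intro tendsto_divide tl_lim tendsto_const) auto
  ultimately have "prob (B j) \<le> 0" by (intro LIMSEQ_le_const[where X="\<lambda>N. tl N / ?e\<^sup>2"]) auto
  then have "prob (B j) = 0" using measure_nonneg[of M "B j"] by linarith
  then show ?thesis by (intro null_setsI) (auto simp: emeasure_eq_measure)
qed

lemma good_summable:
  assumes \<omega>: "\<omega> \<in> space M" and nb: "\<forall>j. \<omega> \<notin> B j"
  shows "summable (\<lambda>k. Z k \<omega>)"
proof -
  define S where "S n = (\<Sum>i<n. Z i \<omega>)" for n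
  have TS: "T N k \<omega> = S k - S N" if "N \<le> k" for N k
  proof -
    have "{..<k} = {..<N} \<union> {N..<k}" using that by auto
    then have "S k = S N + T N k \<omega>" unfolding T_def S_def by (metis finite_lessThan finite_atLeastLessThan ivl_disj_int(2) sum.union_disjoint)
    then show ?thesis by linarith
  qed
  have "Cauchy S"
  proof (rule metric_CauchyI)
    fix e :: real assume e: "0 < e"
    obtain j where j: "inverse (real (Suc j)) < e / 2"
      using reals_Archimedean[of "e/2"] e by auto
    from nb \<omega> have "\<not> (\<forall>N. \<exists>k\<ge>N. 1 / real (Suc j) \<le> \<bar>T N k \<omega>\<bar>)" unfolding B_def by blast
    then obtain N where N: "\<And>k. k \<ge> N \<Longrightarrow> \<bar>T N k \<omega>\<bar> < 1 / real (Suc j)"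
      by (meson not_le)
    show "\<exists>M. \<forall>m\<ge>M. \<forall>n\<ge>M. dist (S m) (S n) < e"
    proof (intro exI allI impI)
      fix m n assume m: "N \<le> m" and n: "N \<le> n"
      have a: "\<bar>T N m \<omega>\<bar> < 1 / real (Suc j)" "\<bar>T N n \<omega>\<bar> < 1 / real (Suc j)" using N m n by auto
      have "dist (S m) (S n) = \<bar>T N m \<omega> - T N n \<omega>\<bar>" unfolding TS[OF m] TS[OF n] dist_real_def by simp
      also have "\<dots> < e" using a j unfolding inverse_eq_divide by linarith
      finally show "dist (S m) (S n) < e" .
    qed
  qed
  then show ?thesis unfolding summable_iff_convergent S_def[symmetric] by (simp add: Cauchy_convergent_iff)
qed

theorem ae_summable: "AE \<omega> in M. summable (\<lambda>k. Z k \<omega>)"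
proof -
  have "AE \<omega> in M. \<forall>j. \<omega> \<notin> B j"
    unfolding AE_all_countable
  proof
    fix j show "AE \<omega> in M. \<omega> \<notin> B j" by (rule AE_I'[OF B_null[of j]]) auto
  qed
  moreover have "AE \<omega> in M. (\<forall>j. \<omega> \<notin> B j) \<longrightarrow> summable (\<lambda>k. Z k \<omega>)"
    by (rule AE_I2) (blast intro: good_summable)
  ultimately show ?thesis by (rule AE_mp)
qed

end

lemma lim0I:
  fixes X :: "nat \<Rightarrow> real"
  assumes "\<And>\<epsilon>. 0 < \<epsilon> \<Longrightarrow> eventually (\<lambda>n. \<bar>X n\<bar> \<le> \<epsilon>) sequentially"
  shows "X \<longlonglongrightarrow> 0"
proof (rule tendstoI)
  fix e :: real assume e: "0 < e"
  have "eventually (\<lambda>n. \<bar>X n\<bar> \<le> e/2) sequentially" using e by (intro assms) auto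
  then show "eventually (\<lambda>n. dist (X n) 0 < e) sequentially"
    by eventually_elim (use e in auto)
qed

lemma lim0D:
  fixes X :: "nat \<Rightarrow> real"
  assumes "X \<longlonglongrightarrow> 0" "0 < \<epsilon>"
  shows "eventually (\<lambda>n. \<bar>X n\<bar> \<le> \<epsilon>) sequentially"
proof -
  have "eventually (\<lambda>n. dist (X n) 0 < \<epsilon>) sequentially" using tendstoD[OF assms] .
  then show ?thesis by eventually_elim auto
qed

lemma SL:
  fixes \<tau> u v :: "nat \<Rightarrow> real"
  assumes \<tau>0: "\<And>k. 0 \<le> \<tau> k" and ns: "\<not> summable \<tau>"
    and ev: "eventually (\<lambda>k. \<tau> k \<le> 1 \<and> u (Suc k) \<le> (1 - \<tau> k) * u k + \<tau> k * v k \<and> v k \<le> w) sequentially"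
    and \<delta>: "0 < \<delta>"
  shows "eventually (\<lambda>k. u k \<le> w + \<delta>) sequentially"
proof -
  obtain K where K: "\<And>k. k \<ge> K \<Longrightarrow> \<tau> k \<le> 1 \<and> u (Suc k) \<le> (1 - \<tau> k) * u k + \<tau> k * v k \<and> v k \<le> w"
    using ev unfolding eventually_sequentially by blast
  define e where "e k = max (u k - w) 0" for k
  have e0: "0 \<le> e k" for k by (simp add: e_def)
  have estep: "e (Suc k) \<le> (1 - \<tau> k) * e k" if "k \<ge> K" for k
  proof -
    from K[OF that] have t1: "\<tau> k \<le> 1" and rec: "u (Suc k) \<le> (1 - \<tau> k) * u k + \<tau> k * v k" and vw: "v k \<le> w" by auto
    have tv: "\<tau> k * v k \<le> \<tau> k * w" using vw \<tau>0[of k] by (rule mult_left_mono)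
    have eq: "(1 - \<tau> k) * (u k - w) = (1 - \<tau> k) * u k + \<tau> k * w - w" by (simp add: algebra_simps)
    have a: "u (Suc k) - w \<le> (1 - \<tau> k) * (u k - w)" using rec tv eq by linarith
    have b: "(1 - \<tau> k) * (u k - w) \<le> (1 - \<tau> k) * e k" by (rule mult_left_mono) (auto simp: e_def t1)
    have c: "0 \<le> (1 - \<tau> k) * e k" using t1 e0 by simp
    show ?thesis unfolding e_def[of "Suc k"] using a b c by linarith
  qed
  have eb: "e (K + n) \<le> e K * exp (- (\<Sum>l<n. \<tau> (K + l)))" for n
  proof (induction n)
    case 0 show ?case by simp
  next
    case (Suc n)
    have "e (K + Suc n) \<le> (1 - \<tau> (K+n)) * e (K+n)" using estep[of "K+n"] by simp
    also have "\<dots> \<le> exp (- \<tau> (K+n)) * e (K+n)"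
      by (rule mult_right_mono) (use exp_ge_add_one_self[of "- \<tau> (K+n)"] e0 in auto)
    also have "\<dots> \<le> exp (- \<tau> (K+n)) * (e K * exp (- (\<Sum>l<n. \<tau> (K + l))))"
      by (rule mult_left_mono[OF Suc.IH]) simp
    also have "\<dots> = e K * exp (- (\<Sum>l<Suc n. \<tau> (K + l)))"
      by (simp add: exp_add[symmetric] algebra_simps exp_diff)
    finally show ?case .
  qed
  have div: "\<exists>n. B < (\<Sum>l<n. \<tau> (K + l))" for B
  proof (rule ccontr)
    assume "\<not> ?thesis" then have "\<And>n. (\<Sum>l<n. \<tau> (K+l)) \<le> B" by (auto simp: not_less)
    then have "summable (\<lambda>l. \<tau> (l + K))" by (intro summableI_nonneg_bounded[where x=B]) (auto simp: \<tau>0 add.commute)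
    then show False using ns by simp
  qed
  have "\<exists>N. \<forall>n\<ge>N. e (K + n) \<le> \<delta>"
  proof (cases "e K = 0")
    case True then show ?thesis using eb \<delta> by (intro exI[of _ 0]) (auto intro: order_trans less_imp_le)
  next
    case False
    then have eK: "0 < e K" using e0[of K] by linarith
    obtain N where N: "ln (e K / \<delta>) < (\<Sum>l<N. \<tau> (K + l))" using div by blast
    show ?thesis
    proof (intro exI allI impI)
      fix n assume n: "N \<le> n"
      have mono: "(\<Sum>l<N. \<tau> (K + l)) \<le> (\<Sum>l<n. \<tau> (K + l))" by (rule sum_mono2) (use n \<tau>0 in auto)
      have "e (K+n) \<le> e K * exp (- (\<Sum>l<n. \<tau> (K + l)))" by (rule eb)
      also have "\<dots> \<le> e K * exp (- ln (e K / \<delta>))" using N mono eK by (intro mult_left_mono) auto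
      also have "\<dots> = \<delta>" using eK \<delta> by (simp add: exp_minus)
      finally show "e (K+n) \<le> \<delta>" .
    qed
  qed
  then obtain N where N: "\<And>n. n \<ge> N \<Longrightarrow> e (K + n) \<le> \<delta>" by blast
  show ?thesis unfolding eventually_sequentially
  proof (intro exI allI impI)
    fix k assume "K + N \<le> k"
    then have "e k \<le> \<delta>" using N[of "k - K"] by simp
    then show "u k \<le> w + \<delta>" unfolding e_def by linarith
  qed
qed

lemma NL:
  fixes \<alpha> u V W :: "nat \<Rightarrow> real"
  assumes c: "0 < c" and \<alpha>0: "\<And>k. 0 \<le> \<alpha> k" and \<alpha>lim: "\<alpha> \<longlonglongrightarrow> 0" and ns: "\<not> summable \<alpha>"
    and su: "summable u" and Vb: "\<And>k. \<bar>V k\<bar> \<le> B" and VL: "\<And>k. \<bar>V (Suc k) - V k\<bar> \<le> L * \<alpha> k"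
    and W: "\<And>k. W (Suc k) = (1 - c * \<alpha> k) * W k + u k * V k"
  shows "W \<longlonglongrightarrow> 0"
proof -
  define r where "r k = (\<Sum>l. u (l + k))" for k
  have rlim: "r \<longlonglongrightarrow> 0" unfolding r_def by (rule suminf_exist_split2[OF su])
  have rstep: "u k = r k - r (Suc k)" for k
  proof -
    have s: "summable (\<lambda>l. u (l + k))" using su by simp
    have "(\<Sum>l. u (Suc l + k)) = (\<Sum>l. u (l + k)) - u (0 + k)" by (rule suminf_split_head[OF s])
    then show ?thesis unfolding r_def by simp
  qed
  have B0: "0 \<le> B" using Vb[of 0] by linarith
  define Y where "Y k = W k + r k * V k" for k
  have Ystep: "Y (Suc k) = (1 - c * \<alpha> k) * Y k + c * \<alpha> k * (r k * V k) + r (Suc k) * (V (Suc k) - V k)" for k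
    unfolding Y_def W rstep by (simp add: algebra_simps)
  define v where "v k = \<bar>r k\<bar> * B + \<bar>r (Suc k)\<bar> * L / c" for k
  have vlim: "v \<longlonglongrightarrow> 0"
  proof -
    have "(\<lambda>k. \<bar>r k\<bar> * B + \<bar>r (Suc k)\<bar> * L / c) \<longlonglongrightarrow> \<bar>0\<bar> * B + \<bar>0\<bar> * L / c"
      using c by (intro tendsto_intros rlim LIMSEQ_Suc[OF rlim]) auto
    then show ?thesis unfolding v_def by simp
  qed
  have ca: "eventually (\<lambda>k. c * \<alpha> k \<le> 1) sequentially"
  proof -
    have "eventually (\<lambda>k. \<bar>\<alpha> k\<bar> \<le> 1 / c) sequentially" using c by (intro lim0D[OF \<alpha>lim]) auto
    then show ?thesis by eventually_elim (use c \<alpha>0 in \<open>auto simp: field_simps\<close>)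
  qed
  have Ylim: "Y \<longlonglongrightarrow> 0"
  proof (rule lim0I)
    fix \<epsilon> :: real assume e: "0 < \<epsilon>"
    have ev2: "eventually (\<lambda>n. \<bar>v n\<bar> \<le> \<epsilon>/2) sequentially" using e by (intro lim0D[OF vlim]) auto
    have ev: "eventually (\<lambda>k. c * \<alpha> k \<le> 1 \<and> \<bar>Y (Suc k)\<bar> \<le> (1 - c * \<alpha> k) * \<bar>Y k\<bar> + c * \<alpha> k * v k \<and> v k \<le> \<epsilon>/2) sequentially"
      using ca ev2
    proof eventually_elim
      case (elim k)
      then have c1: "c * \<alpha> k \<le> 1" and vk: "\<bar>v k\<bar> \<le> \<epsilon>/2" by auto
      have ca0: "0 \<le> c * \<alpha> k" using c \<alpha>0[of k] by simp
      have "\<bar>Y (Suc k)\<bar> \<le> \<bar>(1 - c * \<alpha> k) * Y k\<bar> + \<bar>c * \<alpha> k * (r k * V k)\<bar> + \<bar>r (Suc k) * (V (Suc k) - V k)\<bar>"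
        unfolding Ystep by linarith
      also have "\<bar>(1 - c * \<alpha> k) * Y k\<bar> = (1 - c * \<alpha> k) * \<bar>Y k\<bar>" using c1 by (simp add: abs_mult)
      also have "\<bar>c * \<alpha> k * (r k * V k)\<bar> \<le> c * \<alpha> k * (\<bar>r k\<bar> * B)"
      proof -
        have "\<bar>c * \<alpha> k * (r k * V k)\<bar> = c * \<alpha> k * (\<bar>r k\<bar> * \<bar>V k\<bar>)" using c \<alpha>0[of k] by (simp add: abs_mult)
        also have "\<dots> \<le> c * \<alpha> k * (\<bar>r k\<bar> * B)" using ca0 Vb[of k] by (intro mult_left_mono) auto
        finally show ?thesis .
      qed
      also have "\<bar>r (Suc k) * (V (Suc k) - V k)\<bar> \<le> \<bar>r (Suc k)\<bar> * (L * \<alpha> k)"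
        by (simp add: abs_mult mult_left_mono VL)
      also have "\<bar>r (Suc k)\<bar> * (L * \<alpha> k) = c * \<alpha> k * (\<bar>r (Suc k)\<bar> * L / c)" using c by simp
      finally have "\<bar>Y (Suc k)\<bar> \<le> (1 - c * \<alpha> k) * \<bar>Y k\<bar> + c * \<alpha> k * v k"
        unfolding v_def by (simp add: algebra_simps)
      then show ?case using c1 vk by auto
    qed
    have "eventually (\<lambda>k. \<bar>Y k\<bar> \<le> \<epsilon>/2 + \<epsilon>/2) sequentially"
      by (rule SL[where \<tau>="\<lambda>k. c * \<alpha> k" and v=v]) (use c \<alpha>0 ns ev e in auto)
    then show "eventually (\<lambda>k. \<bar>Y k\<bar> \<le> \<epsilon>) sequentially" by simp
  qed
  have rV: "(\<lambda>k. r k * V k) \<longlonglongrightarrow> 0"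
  proof (rule lim0I)
    fix \<epsilon> :: real assume e: "0 < \<epsilon>"
    have "eventually (\<lambda>k. \<bar>r k\<bar> \<le> \<epsilon> / (B + 1)) sequentially" using e B0 by (intro lim0D[OF rlim]) auto
    then show "eventually (\<lambda>k. \<bar>r k * V k\<bar> \<le> \<epsilon>) sequentially"
    proof eventually_elim
      case (elim k)
      have "\<bar>r k * V k\<bar> \<le> (\<epsilon> / (B + 1)) * B" unfolding abs_mult by (intro mult_mono elim Vb) (use e B0 in auto)
      also have "\<dots> \<le> \<epsilon>" using e B0 by (simp add: field_simps)
      finally show ?case .
    qed
  qed
  have "(\<lambda>k. Y k - r k * V k) \<longlonglongrightarrow> 0 - 0" by (intro tendsto_diff Ylim rV)
  then show ?thesis by (simp add: Y_def)
qed

lemma abs_Max_le: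
  fixes f :: "'a::finite \<Rightarrow> real"
  assumes "\<And>a. \<bar>f a\<bar> \<le> C"
  shows "\<bar>Max (range f)\<bar> \<le> C"
proof -
  have fin: "finite (range f)" "range f \<noteq> {}" by auto
  have "Max (range f) \<in> range f" by (rule Max_in) auto
  then obtain a where a: "Max (range f) = f a" by blast
  show ?thesis using assms[of a] unfolding a .
qed

lemma Max_diff:
  fixes f g :: "'a::finite \<Rightarrow> real"
  assumes "\<And>a. \<bar>f a - g a\<bar> \<le> D"
  shows "\<bar>Max (range f) - Max (range g)\<bar> \<le> D"
proof -
  have fin: "finite (range f)" "range f \<noteq> {}" "finite (range g)" "range g \<noteq> {}" by auto
  have "Max (range f) \<in> range f" by (rule Max_in) auto
  then obtain a where a: "Max (range f) = f a" by blast
  have "Max (range g) \<in> range g" by (rule Max_in) auto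
  then obtain b where b: "Max (range g) = g b" by blast
  have "f b \<le> f a" unfolding a[symmetric] by (rule Max_ge) auto
  moreover have "g a \<le> g b" unfolding b[symmetric] by (rule Max_ge) auto
  ultimately show ?thesis unfolding a b using assms[of a] assms[of b] by linarith
qed

locale qdet =
  fixes r :: "'s::finite \<Rightarrow> 'a::finite \<Rightarrow> 's \<Rightarrow> real" and \<gamma> \<beta> :: real and \<alpha> :: "nat \<Rightarrow> real"
    and xs :: "nat \<Rightarrow> 's \<times> 'a \<times> 's" and QA0 QB0 :: "'s \<Rightarrow> 'a \<Rightarrow> real"
    and P :: "'s \<Rightarrow> 'a \<Rightarrow> 's pmf" and d :: "'s \<Rightarrow> 'a \<Rightarrow> real" and Qs :: "'s \<Rightarrow> 'a \<Rightarrow> real"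
  assumes gam: "0 \<le> \<gamma>" "\<gamma> < 1" and bet: "0 < \<beta>"
    and \<alpha>0: "\<And>k. 0 \<le> \<alpha> k" and \<alpha>lim: "\<alpha> \<longlonglongrightarrow> 0" and ns: "\<not> summable \<alpha>"
    and dpos: "\<And>s a. 0 < d s a"
    and noise: "\<And>s a s'. summable (\<lambda>k. \<alpha> k * ((if xs k = (s,a,s') then 1 else 0) - d s a * pmf (P s a) s'))"
    and fixp: "\<And>s a. Qs s a = (\<Sum>s'\<in>UNIV. pmf (P s a) s' * (r s a s' + \<gamma> * Max (range (Qs s'))))"
begin

definition z :: "nat \<Rightarrow> bool \<Rightarrow> 's \<Rightarrow> 'a \<Rightarrow> real" where
  "z k b = (if b then fst else snd) (sgt2 r \<gamma> \<beta> \<alpha> xs QA0 QB0 k)"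

definition mx :: "nat \<Rightarrow> bool \<Rightarrow> 's \<Rightarrow> real" where
  "mx k b s' = Max (range (z k b s'))"

definition F :: "nat \<Rightarrow> bool \<Rightarrow> 's \<Rightarrow> 'a \<Rightarrow> 's \<Rightarrow> real" where
  "F k b s a s' = r s a s' + \<gamma> * mx k (\<not> b) s' - z k b s a + \<beta> * (z k (\<not> b) s a - z k b s a)"

lemma z_step:
  "z (Suc k) b s a = z k b s a + \<alpha> k * (if (s, a) = (fst (xs k), fst (snd (xs k))) then F k b s a (snd (snd (xs k))) else 0)"
proof -
  obtain s0 a0 s0' where x: "xs k = (s0, a0, s0')" by (cases "xs k") auto
  obtain QA QB where q: "sgt2 r \<gamma> \<beta> \<alpha> xs QA0 QB0 k = (QA, QB)" by (cases "sgt2 r \<gamma> \<beta> \<alpha> xs QA0 QB0 k") auto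
  show ?thesis
    by (cases b) (auto simp: z_def F_def mx_def x q Let_def)
qed

end

context qdet begin

definition Rm :: real where
  "Rm = Max (range (\<lambda>x::'s \<times> 'a \<times> 's. \<bar>r (fst x) (fst (snd x)) (snd (snd x))\<bar>))"

lemma r_bound: "\<bar>r s a s'\<bar> \<le> Rm"
  unfolding Rm_def by (rule Max_ge) (auto intro!: image_eqI[where x="(s,a,s')"])

lemma Rm0: "0 \<le> Rm" using r_bound[of undefined undefined undefined] by linarith

lemma mx_bound: "(\<And>a. \<bar>z k b s' a\<bar> \<le> C) \<Longrightarrow> \<bar>mx k b s'\<bar> \<le> C"
  unfolding mx_def by (rule abs_Max_le)

lemma z_Suc_bound:
  assumes t1: "\<alpha> k * (1 + \<beta>) \<le> 1" and RC: "Rm \<le> (1 - \<gamma>) * C" and zb: "\<And>b s a. \<bar>z k b s a\<bar> \<le> C"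
  shows "\<bar>z (Suc k) b s a\<bar> \<le> C"
proof (cases "(s, a) = (fst (xs k), fst (snd (xs k)))")
  case False
  then have "z (Suc k) b s a = z k b s a" by (simp only: z_step if_False)
  then show ?thesis using zb by simp
next
  case True
  let ?s' = "snd (snd (xs k))"
  let ?t = "\<alpha> k"
  have t0: "0 \<le> ?t" by (rule \<alpha>0)
  have A0: "0 \<le> 1 - ?t * (1 + \<beta>)" using t1 by simp
  have eq: "z (Suc k) b s a = (1 - ?t * (1 + \<beta>)) * z k b s a + ?t * (r s a ?s' + \<gamma> * mx k (\<not> b) ?s' + \<beta> * z k (\<not> b) s a)"
    using True by (simp add: z_step F_def algebra_simps)
  have "\<bar>z (Suc k) b s a\<bar> \<le> (1 - ?t * (1 + \<beta>)) * \<bar>z k b s a\<bar> + ?t * (\<bar>r s a ?s'\<bar> + \<gamma> * \<bar>mx k (\<not> b) ?s'\<bar> + \<beta> * \<bar>z k (\<not> b) s a\<bar>)"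
  proof -
    let ?Y = "r s a ?s' + \<gamma> * mx k (\<not> b) ?s' + \<beta> * z k (\<not> b) s a"
    let ?A = "1 - ?t * (1 + \<beta>)"
    have g1: "\<bar>\<gamma> * mx k (\<not> b) ?s'\<bar> = \<gamma> * \<bar>mx k (\<not> b) ?s'\<bar>" using gam by (simp add: abs_mult)
    have g2: "\<bar>\<beta> * z k (\<not> b) s a\<bar> = \<beta> * \<bar>z k (\<not> b) s a\<bar>" using bet by (simp add: abs_mult)
    have h1: "\<bar>?Y\<bar> \<le> \<bar>r s a ?s'\<bar> + \<gamma> * \<bar>mx k (\<not> b) ?s'\<bar> + \<beta> * \<bar>z k (\<not> b) s a\<bar>"
      using abs_triangle_ineq[of "r s a ?s'" "\<gamma> * mx k (\<not> b) ?s'"]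
        abs_triangle_ineq[of "r s a ?s' + \<gamma> * mx k (\<not> b) ?s'" "\<beta> * z k (\<not> b) s a"] g1 g2 by linarith
    have a1: "\<bar>?A * z k b s a\<bar> = ?A * \<bar>z k b s a\<bar>" using A0 by (simp add: abs_mult)
    have a2: "\<bar>?t * ?Y\<bar> = ?t * \<bar>?Y\<bar>" using t0 by (simp add: abs_mult)
    have a3: "?t * \<bar>?Y\<bar> \<le> ?t * (\<bar>r s a ?s'\<bar> + \<gamma> * \<bar>mx k (\<not> b) ?s'\<bar> + \<beta> * \<bar>z k (\<not> b) s a\<bar>)"
      using t0 h1 by (rule mult_left_mono[rotated])
    show ?thesis unfolding eq using abs_triangle_ineq[of "?A * z k b s a" "?t * ?Y"] a1 a2 a3 by linarith
  qed
  also have "\<dots> \<le> (1 - ?t * (1 + \<beta>)) * C + ?t * (Rm + \<gamma> * C + \<beta> * C)"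
  proof -
    have "\<gamma> * \<bar>mx k (\<not> b) ?s'\<bar> \<le> \<gamma> * C" using gam by (intro mult_left_mono mx_bound zb) auto
    moreover have "\<beta> * \<bar>z k (\<not> b) s a\<bar> \<le> \<beta> * C" using bet by (intro mult_left_mono zb) auto
    ultimately have "?t * (\<bar>r s a ?s'\<bar> + \<gamma> * \<bar>mx k (\<not> b) ?s'\<bar> + \<beta> * \<bar>z k (\<not> b) s a\<bar>) \<le> ?t * (Rm + \<gamma> * C + \<beta> * C)"
      using r_bound[of s a ?s'] t0 by (intro mult_left_mono) auto
    moreover have "(1 - ?t * (1 + \<beta>)) * \<bar>z k b s a\<bar> \<le> (1 - ?t * (1 + \<beta>)) * C" using A0 zb by (intro mult_left_mono) auto
    ultimately show ?thesis by linarith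
  qed
  also have "\<dots> = C + ?t * (Rm - (1 - \<gamma>) * C)" by (simp add: algebra_simps)
  also have "\<dots> \<le> C" using RC t0 by (simp add: mult_nonneg_nonpos)
  finally show ?thesis .
qed

lemma ev_step: "eventually (\<lambda>k. \<alpha> k * (1 + \<beta>) \<le> 1) sequentially"
proof -
  have "eventually (\<lambda>k. \<bar>\<alpha> k\<bar> \<le> 1 / (1 + \<beta>)) sequentially" using bet by (intro lim0D[OF \<alpha>lim]) auto
  then show ?thesis by eventually_elim (use bet \<alpha>0 in \<open>auto simp: field_simps\<close>)
qed

lemma bounded: "\<exists>C. 0 \<le> C \<and> Rm \<le> (1 - \<gamma>) * C \<and> (\<forall>k b s a. \<bar>z k b s a\<bar> \<le> C)"
proof -
  obtain K where K: "\<And>k. k \<ge> K \<Longrightarrow> \<alpha> k * (1 + \<beta>) \<le> 1" using ev_step unfolding eventually_sequentially by blast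
  define S where "S k = (\<Sum>i\<in>UNIV. \<bar>z k (fst i) (fst (snd i)) (snd (snd i))\<bar>)" for k
  define C where "C = max (\<Sum>k\<le>K. S k) (Rm / (1 - \<gamma>))"
  have S0: "0 \<le> S k" for k unfolding S_def by (intro sum_nonneg) auto
  have zS: "\<bar>z k b s a\<bar> \<le> S k" for k b s a
    unfolding S_def using member_le_sum[of "(b,s,a)" UNIV "\<lambda>i. \<bar>z k (fst i) (fst (snd i)) (snd (snd i))\<bar>"] by auto
  have early: "\<bar>z k b s a\<bar> \<le> C" if "k \<le> K" for k b s a
  proof -
    have "S k \<le> (\<Sum>k\<le>K. S k)" using that by (intro member_le_sum) (auto simp: S0)
    then show ?thesis using zS[of k b s a] unfolding C_def by linarith
  qed
  have RC: "Rm \<le> (1 - \<gamma>) * C"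
  proof -
    have "Rm / (1 - \<gamma>) \<le> C" unfolding C_def by simp
    then show ?thesis using gam by (simp add: field_simps)
  qed
  have late: "\<forall>b s a. \<bar>z k b s a\<bar> \<le> C" if "K \<le> k" for k
    using that
  proof (induction k rule: dec_induct)
    case base then show ?case using early by auto
  next
    case (step k)
    then show ?case using z_Suc_bound[OF K[OF step.hyps(1)] RC] by blast
  qed
  have C0: "0 \<le> C" unfolding C_def using Rm0 gam by (simp add: le_max_iff_disj)
  have all: "\<forall>k b s a. \<bar>z k b s a\<bar> \<le> C"
  proof (intro allI)
    fix k b s a show "\<bar>z k b s a\<bar> \<le> C"
    proof (cases "k \<le> K")
      case True then show ?thesis by (rule early)
    next
      case False then have "K \<le> k" by simp
      then show ?thesis using late by blast
    qed
  qed
  show ?thesis using all C0 RC by blast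
qed

end

lemma tri_a:
  fixes x y w u g b :: real
  assumes "0 \<le> g" "0 \<le> b"
  shows "\<bar>x + g * y - w + b * (u - w)\<bar> \<le> \<bar>x\<bar> + g * \<bar>y\<bar> + \<bar>w\<bar> + b * \<bar>u\<bar> + b * \<bar>w\<bar>"
proof -
  have 1: "\<bar>g * y\<bar> = g * \<bar>y\<bar>" using assms by (simp add: abs_mult)
  have 2: "\<bar>b * (u - w)\<bar> = b * \<bar>u - w\<bar>" using assms by (simp add: abs_mult)
  have 3: "b * \<bar>u - w\<bar> \<le> b * (\<bar>u\<bar> + \<bar>w\<bar>)" using assms by (intro mult_left_mono) auto
  show ?thesis using 1 2 3 by (simp add: algebra_simps) linarith
qed

lemma tri_b:
  fixes A B C g c b :: real
  assumes "0 \<le> g" "0 \<le> c" "0 \<le> b"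
  shows "\<bar>g * A - c * B + b * C\<bar> \<le> g * \<bar>A\<bar> + c * \<bar>B\<bar> + b * \<bar>C\<bar>"
proof -
  have "\<bar>g * A\<bar> = g * \<bar>A\<bar>" "\<bar>c * B\<bar> = c * \<bar>B\<bar>" "\<bar>b * C\<bar> = b * \<bar>C\<bar>" using assms by (simp_all add: abs_mult)
  then show ?thesis by linarith
qed

context qdet begin

definition Cb :: real where
  "Cb = (SOME C. 0 \<le> C \<and> Rm \<le> (1 - \<gamma>) * C \<and> (\<forall>k b s a. \<bar>z k b s a\<bar> \<le> C))"

lemma Cb: "0 \<le> Cb" "Rm \<le> (1 - \<gamma>) * Cb" "\<bar>z k b s a\<bar> \<le> Cb"
  using someI_ex[OF bounded] unfolding Cb_def[symmetric] by auto

definition BF :: real where "BF = Rm + \<gamma> * Cb + (1 + 2 * \<beta>) * Cb"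

lemma F_bound: "\<bar>F k b s a s'\<bar> \<le> BF"
proof -
  have m: "\<bar>mx k (\<not> b) s'\<bar> \<le> Cb" by (rule mx_bound) (rule Cb)
  have "\<bar>F k b s a s'\<bar> \<le> \<bar>r s a s'\<bar> + \<gamma> * \<bar>mx k (\<not> b) s'\<bar> + \<bar>z k b s a\<bar> + \<beta> * \<bar>z k (\<not> b) s a\<bar> + \<beta> * \<bar>z k b s a\<bar>"
    unfolding F_def using gam bet by (intro tri_a) auto
  also have "\<dots> \<le> Rm + \<gamma> * Cb + Cb + \<beta> * Cb + \<beta> * Cb"
    using r_bound[of s a s'] Cb(3)[of k b s a] Cb(3)[of k "\<not> b" s a] m gam bet
    by (intro add_mono mult_left_mono) auto
  also have "\<dots> = BF" unfolding BF_def by (simp add: algebra_simps)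
  finally show ?thesis .
qed

lemma z_diff: "\<bar>z (Suc k) b s a - z k b s a\<bar> \<le> \<alpha> k * BF"
proof -
  have "\<bar>z (Suc k) b s a - z k b s a\<bar> = \<alpha> k * \<bar>if (s, a) = (fst (xs k), fst (snd (xs k))) then F k b s a (snd (snd (xs k))) else 0\<bar>"
    unfolding z_step using \<alpha>0[of k] by (simp add: abs_mult)
  also have "\<dots> \<le> \<alpha> k * BF" using F_bound \<alpha>0[of k] BF_def Cb Rm0 gam bet
    by (intro mult_left_mono) (auto simp: F_bound)
  finally show ?thesis .
qed

lemma mx_diff: "\<bar>mx (Suc k) b s' - mx k b s'\<bar> \<le> \<alpha> k * BF"
  unfolding mx_def by (rule Max_diff) (rule z_diff)

lemma F_diff: "\<bar>F (Suc k) b s a s' - F k b s a s'\<bar> \<le> ((\<gamma> + 1 + 2 * \<beta>) * BF) * \<alpha> k"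
proof -
  have "F (Suc k) b s a s' - F k b s a s' = \<gamma> * (mx (Suc k) (\<not> b) s' - mx k (\<not> b) s')
      - (1 + \<beta>) * (z (Suc k) b s a - z k b s a) + \<beta> * (z (Suc k) (\<not> b) s a - z k (\<not> b) s a)"
    unfolding F_def by (simp add: algebra_simps)
  have "\<bar>F (Suc k) b s a s' - F k b s a s'\<bar> \<le> \<gamma> * \<bar>mx (Suc k) (\<not> b) s' - mx k (\<not> b) s'\<bar>
      + (1 + \<beta>) * \<bar>z (Suc k) b s a - z k b s a\<bar> + \<beta> * \<bar>z (Suc k) (\<not> b) s a - z k (\<not> b) s a\<bar>"
    unfolding \<open>F (Suc k) b s a s' - F k b s a s' = _\<close> using gam bet by (intro tri_b) auto
  also have "\<dots> \<le> \<gamma> * (\<alpha> k * BF) + (1 + \<beta>) * (\<alpha> k * BF) + \<beta> * (\<alpha> k * BF)"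
    using gam bet by (intro add_mono mult_left_mono mx_diff z_diff) auto
  also have "\<dots> = ((\<gamma> + 1 + 2 * \<beta>) * BF) * \<alpha> k" by (simp add: algebra_simps)
  finally show ?thesis .
qed

end

lemma tri_c:
  fixes A C g b :: real
  assumes "0 \<le> g" "0 \<le> b"
  shows "\<bar>g * A + b * C\<bar> \<le> g * \<bar>A\<bar> + b * \<bar>C\<bar>"
proof -
  have "\<bar>g * A\<bar> = g * \<bar>A\<bar>" "\<bar>b * C\<bar> = b * \<bar>C\<bar>" using assms by (simp_all add: abs_mult)
  then show ?thesis by linarith
qed

context qdet begin

definition q :: "'s \<Rightarrow> 'a \<Rightarrow> 's \<Rightarrow> real" where "q s a s' = d s a * pmf (P s a) s'"
definition \<xi> :: "nat \<Rightarrow> 's \<Rightarrow> 'a \<Rightarrow> 's \<Rightarrow> real" where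
  "\<xi> k s a s' = (if xs k = (s,a,s') then 1 else 0) - q s a s'"
definition G :: "nat \<Rightarrow> bool \<Rightarrow> 's \<Rightarrow> 'a \<Rightarrow> real" where
  "G k b s a = (\<Sum>s'\<in>UNIV. pmf (P s a) s' * (r s a s' + \<gamma> * mx k (\<not> b) s')) + \<beta> * z k (\<not> b) s a"
definition nn :: "nat \<Rightarrow> bool \<Rightarrow> 's \<Rightarrow> 'a \<Rightarrow> real" where
  "nn k b s a = (\<Sum>s'\<in>UNIV. \<xi> k s a s' * F k b s a s')"
definition cc :: "'s \<Rightarrow> 'a \<Rightarrow> real" where "cc s a = d s a * (1 + \<beta>)"

lemma sP: "(\<Sum>s'\<in>UNIV. pmf (P s a) s') = 1"
  by (rule sum_pmf_eq_1) auto

lemma ind_sum: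
  "(\<Sum>s'\<in>UNIV. (if xs k = (s,a,s') then 1 else 0) * F k b s a s')
   = (if (s, a) = (fst (xs k), fst (snd (xs k))) then F k b s a (snd (snd (xs k))) else 0)"
proof -
  obtain s0 a0 s0' where x: "xs k = (s0, a0, s0')" by (cases "xs k") auto
  show ?thesis
  proof (cases "s = s0 \<and> a = a0")
    case True
    then have "(\<Sum>s'\<in>UNIV. (if xs k = (s,a,s') then 1 else 0) * F k b s a s') = (\<Sum>s'\<in>UNIV. if s' = s0' then F k b s a s' else 0)"
      by (intro sum.cong) (auto simp: x)
    also have "\<dots> = F k b s a s0'" by simp
    finally show ?thesis using True x by simp
  next
    case False then show ?thesis by (auto simp: x)
  qed
qed

lemma z_dec:
  "z (Suc k) b s a = z k b s a + \<alpha> k * d s a * (G k b s a - (1 + \<beta>) * z k b s a) + \<alpha> k * nn k b s a"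
proof -
  have "(\<Sum>s'\<in>UNIV. (if xs k = (s,a,s') then 1 else 0) * F k b s a s')
      = (\<Sum>s'\<in>UNIV. q s a s' * F k b s a s' + \<xi> k s a s' * F k b s a s')"
    by (intro sum.cong) (auto simp: \<xi>_def algebra_simps)
  also have "\<dots> = (\<Sum>s'\<in>UNIV. q s a s' * F k b s a s') + nn k b s a"
    unfolding nn_def by (rule sum.distrib)
  also have "(\<Sum>s'\<in>UNIV. q s a s' * F k b s a s')
      = (\<Sum>s'\<in>UNIV. d s a * (pmf (P s a) s' * (r s a s' + \<gamma> * mx k (\<not> b) s'))
          + (d s a * (\<beta> * z k (\<not> b) s a - (1 + \<beta>) * z k b s a)) * pmf (P s a) s')"
    by (intro sum.cong) (auto simp: q_def F_def algebra_simps)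
  also have "\<dots> = d s a * (\<Sum>s'\<in>UNIV. pmf (P s a) s' * (r s a s' + \<gamma> * mx k (\<not> b) s'))
       + (d s a * (\<beta> * z k (\<not> b) s a - (1 + \<beta>) * z k b s a)) * (\<Sum>s'\<in>UNIV. pmf (P s a) s')"
    by (simp add: sum.distrib sum_distrib_left sum_distrib_right)
  also have "\<dots> = d s a * (G k b s a - (1 + \<beta>) * z k b s a)"
    unfolding sP G_def by (simp add: algebra_simps)
  finally have eq: "(\<Sum>s'\<in>UNIV. (if xs k = (s,a,s') then 1 else 0) * F k b s a s')
      = d s a * (G k b s a - (1 + \<beta>) * z k b s a) + nn k b s a" .
  show ?thesis unfolding z_step ind_sum[symmetric] eq by (simp add: algebra_simps)
qed

primrec Wn :: "bool \<Rightarrow> 's \<Rightarrow> 'a \<Rightarrow> 's \<Rightarrow> nat \<Rightarrow> real" where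
  "Wn b s a s' 0 = 0"
| "Wn b s a s' (Suc k) = (1 - cc s a * \<alpha> k) * Wn b s a s' k + (\<alpha> k * \<xi> k s a s') * F k b s a s'"

lemma cc_pos: "0 < cc s a" unfolding cc_def using dpos[of s a] bet by simp

lemma W_lim: "(\<lambda>k. Wn b s a s' k) \<longlonglongrightarrow> 0"
proof (rule NL[where c="cc s a" and \<alpha>=\<alpha> and u="\<lambda>k. \<alpha> k * \<xi> k s a s'" and V="\<lambda>k. F k b s a s'" and B=BF
      and L="(\<gamma> + 1 + 2 * \<beta>) * BF"])
  show "summable (\<lambda>k. \<alpha> k * \<xi> k s a s')" using noise[of s a s'] by (simp add: \<xi>_def q_def)
qed (auto simp: cc_pos \<alpha>0 \<alpha>lim ns F_bound F_diff)

definition Rr :: "nat \<Rightarrow> bool \<Rightarrow> 's \<Rightarrow> 'a \<Rightarrow> real" where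
  "Rr k b s a = (z k b s a - Qs s a) - (\<Sum>s'\<in>UNIV. Wn b s a s' k)"

lemma R_step:
  "Rr (Suc k) b s a = (1 - cc s a * \<alpha> k) * Rr k b s a + \<alpha> k * d s a * (G k b s a - (1 + \<beta>) * Qs s a)"
proof -
  have "(\<Sum>s'\<in>UNIV. Wn b s a s' (Suc k)) = (\<Sum>s'\<in>UNIV. (1 - cc s a * \<alpha> k) * Wn b s a s' k + \<alpha> k * (\<xi> k s a s' * F k b s a s'))"
    by (simp add: mult.assoc)
  also have "\<dots> = (\<Sum>s'\<in>UNIV. (1 - cc s a * \<alpha> k) * Wn b s a s' k) + (\<Sum>s'\<in>UNIV. \<alpha> k * (\<xi> k s a s' * F k b s a s'))"
    by (rule sum.distrib)
  also have "\<dots> = (1 - cc s a * \<alpha> k) * (\<Sum>s'\<in>UNIV. Wn b s a s' k) + \<alpha> k * nn k b s a"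
    by (simp add: sum_distrib_left nn_def)
  finally have "(\<Sum>s'\<in>UNIV. Wn b s a s' (Suc k)) = (1 - cc s a * \<alpha> k) * (\<Sum>s'\<in>UNIV. Wn b s a s' k) + \<alpha> k * nn k b s a" .
  then show ?thesis unfolding Rr_def z_dec cc_def by (simp add: algebra_simps)
qed

lemma G_bound:
  assumes E: "\<And>b s a. \<bar>z k b s a - Qs s a\<bar> \<le> E"
  shows "\<bar>G k b s a - (1 + \<beta>) * Qs s a\<bar> \<le> (\<gamma> + \<beta>) * E"
proof -
  have eq: "G k b s a - (1 + \<beta>) * Qs s a
     = \<gamma> * (\<Sum>s'\<in>UNIV. pmf (P s a) s' * (mx k (\<not> b) s' - Max (range (Qs s'))))
       + \<beta> * (z k (\<not> b) s a - Qs s a)"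
  proof -
    have "(1 + \<beta>) * Qs s a = (\<Sum>s'\<in>UNIV. pmf (P s a) s' * (r s a s' + \<gamma> * Max (range (Qs s')))) + \<beta> * Qs s a"
      using fixp[of s a] by (simp add: algebra_simps)
    moreover have "(\<Sum>s'\<in>UNIV. pmf (P s a) s' * (r s a s' + \<gamma> * mx k (\<not> b) s'))
        - (\<Sum>s'\<in>UNIV. pmf (P s a) s' * (r s a s' + \<gamma> * Max (range (Qs s'))))
        = \<gamma> * (\<Sum>s'\<in>UNIV. pmf (P s a) s' * (mx k (\<not> b) s' - Max (range (Qs s'))))"
    proof -
      have "(\<Sum>s'\<in>UNIV. pmf (P s a) s' * (r s a s' + \<gamma> * mx k (\<not> b) s'))
        - (\<Sum>s'\<in>UNIV. pmf (P s a) s' * (r s a s' + \<gamma> * Max (range (Qs s'))))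
        = (\<Sum>s'\<in>UNIV. pmf (P s a) s' * (r s a s' + \<gamma> * mx k (\<not> b) s') - pmf (P s a) s' * (r s a s' + \<gamma> * Max (range (Qs s'))))"
        by (rule sum_subtractf[symmetric])
      also have "\<dots> = (\<Sum>s'\<in>UNIV. \<gamma> * (pmf (P s a) s' * (mx k (\<not> b) s' - Max (range (Qs s')))))"
        by (rule sum.cong) (simp_all add: algebra_simps)
      also have "\<dots> = \<gamma> * (\<Sum>s'\<in>UNIV. pmf (P s a) s' * (mx k (\<not> b) s' - Max (range (Qs s'))))"
        by (rule sum_distrib_left[symmetric])
      finally show ?thesis .
    qed
    ultimately show ?thesis unfolding G_def by (simp add: algebra_simps)
  qed
  have md: "\<bar>mx k (\<not> b) s' - Max (range (Qs s'))\<bar> \<le> E" for s'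
    unfolding mx_def by (rule Max_diff) (rule E)
  have "\<bar>\<Sum>s'\<in>UNIV. pmf (P s a) s' * (mx k (\<not> b) s' - Max (range (Qs s')))\<bar>
      \<le> (\<Sum>s'\<in>UNIV. \<bar>pmf (P s a) s' * (mx k (\<not> b) s' - Max (range (Qs s')))\<bar>)" by (rule sum_abs)
  also have "\<dots> \<le> (\<Sum>s'\<in>UNIV. pmf (P s a) s' * E)"
    by (intro sum_mono) (auto simp: abs_mult intro!: mult_left_mono md)
  also have "\<dots> = E" by (simp add: sum_distrib_right[symmetric] sP)
  finally have s1: "\<bar>\<Sum>s'\<in>UNIV. pmf (P s a) s' * (mx k (\<not> b) s' - Max (range (Qs s')))\<bar> \<le> E" .
  have "\<bar>G k b s a - (1 + \<beta>) * Qs s a\<bar> \<le> \<gamma> * \<bar>\<Sum>s'\<in>UNIV. pmf (P s a) s' * (mx k (\<not> b) s' - Max (range (Qs s')))\<bar>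
        + \<beta> * \<bar>z k (\<not> b) s a - Qs s a\<bar>"
    unfolding eq using gam bet by (intro tri_c) auto
  also have "\<dots> \<le> \<gamma> * E + \<beta> * E" using gam bet s1 E by (intro add_mono mult_left_mono) auto
  finally show ?thesis by (simp add: algebra_simps)
qed

end

context qdet begin

definition ws :: "nat \<Rightarrow> real" where
  "ws k = (\<Sum>i\<in>UNIV. \<Sum>s'\<in>UNIV. \<bar>Wn (fst i) (fst (snd i)) (snd (snd i)) s' k\<bar>)"

lemma ws_lim: "ws \<longlonglongrightarrow> 0"
proof -
  have "ws \<longlonglongrightarrow> (\<Sum>i\<in>(UNIV::(bool \<times> 's \<times> 'a) set). \<Sum>s'\<in>(UNIV::'s set). \<bar>0::real\<bar>)"
    unfolding ws_def[abs_def] by (intro tendsto_sum tendsto_rabs W_lim)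
  then show ?thesis by simp
qed

lemma ws0: "0 \<le> ws k" unfolding ws_def by (intro sum_nonneg) auto

lemma W_ws: "\<bar>\<Sum>s'\<in>UNIV. Wn b s a s' k\<bar> \<le> ws k"
proof -
  have "\<bar>\<Sum>s'\<in>UNIV. Wn b s a s' k\<bar> \<le> (\<Sum>s'\<in>UNIV. \<bar>Wn b s a s' k\<bar>)" by (rule sum_abs)
  also have "\<dots> \<le> ws k" unfolding ws_def
    using member_le_sum[of "(b,s,a)" UNIV "\<lambda>i. \<Sum>s'\<in>UNIV. \<bar>Wn (fst i) (fst (snd i)) (snd (snd i)) s' k\<bar>"]
    by (auto intro: sum_nonneg)
  finally show ?thesis .
qed

lemma e_bound: "\<bar>z k b s a - Qs s a\<bar> \<le> \<bar>Rr k b s a\<bar> + ws k"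
  using W_ws[of b s a k] unfolding Rr_def by linarith

definition \<rho> :: real where "\<rho> = (\<gamma> + \<beta>) / (1 + \<beta>)"

lemma \<rho>: "0 \<le> \<rho>" "\<rho> < 1" unfolding \<rho>_def using gam bet by (auto simp: field_simps)

lemma box1:
  assumes ev: "eventually (\<lambda>k. \<forall>b s a. \<bar>Rr k b s a\<bar> \<le> D) sequentially" and \<delta>: "0 < \<delta>"
  shows "eventually (\<lambda>k. \<bar>Rr k b s a\<bar> \<le> \<rho> * D + \<delta>) sequentially"
proof -
  have e1: "eventually (\<lambda>k. cc s a * \<alpha> k \<le> 1) sequentially"
  proof -
    have "eventually (\<lambda>k. \<bar>\<alpha> k\<bar> \<le> 1 / cc s a) sequentially" using cc_pos by (intro lim0D[OF \<alpha>lim]) auto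
    then show ?thesis by eventually_elim (use cc_pos[of s a] \<alpha>0 in \<open>auto simp: field_simps\<close>)
  qed
  have e2: "eventually (\<lambda>k. \<bar>\<rho> * ws k\<bar> \<le> \<delta>/2) sequentially"
    using \<delta> by (intro lim0D tendsto_mult_right_zero ws_lim) auto
  have ev3: "eventually (\<lambda>k. cc s a * \<alpha> k \<le> 1 \<and>
      \<bar>Rr (Suc k) b s a\<bar> \<le> (1 - cc s a * \<alpha> k) * \<bar>Rr k b s a\<bar> + (cc s a * \<alpha> k) * (\<rho> * (D + ws k))
      \<and> \<rho> * (D + ws k) \<le> \<rho> * D + \<delta>/2) sequentially"
    using ev e1 e2
  proof eventually_elim
    case (elim k)
    then have RD: "\<And>b s a. \<bar>Rr k b s a\<bar> \<le> D" and t1: "cc s a * \<alpha> k \<le> 1" and wk: "\<bar>\<rho> * ws k\<bar> \<le> \<delta>/2" by auto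
    have E: "\<bar>z k b' s' a' - Qs s' a'\<bar> \<le> D + ws k" for b' s' a' using e_bound[of k b' s' a'] RD[of b' s' a'] by linarith
    have Gb: "\<bar>G k b s a - (1 + \<beta>) * Qs s a\<bar> \<le> (\<gamma> + \<beta>) * (D + ws k)" by (rule G_bound[OF E])
    have t0: "0 \<le> \<alpha> k * d s a" using \<alpha>0[of k] dpos[of s a] by simp
    have "\<bar>Rr (Suc k) b s a\<bar> \<le> (1 - cc s a * \<alpha> k) * \<bar>Rr k b s a\<bar> + (\<alpha> k * d s a) * \<bar>G k b s a - (1 + \<beta>) * Qs s a\<bar>"
      unfolding R_step using t1 t0 by (intro tri_c) auto
    also have "(\<alpha> k * d s a) * \<bar>G k b s a - (1 + \<beta>) * Qs s a\<bar> \<le> (\<alpha> k * d s a) * ((\<gamma> + \<beta>) * (D + ws k))"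
      using t0 Gb by (rule mult_left_mono[rotated])
    also have "(\<alpha> k * d s a) * ((\<gamma> + \<beta>) * (D + ws k)) = (cc s a * \<alpha> k) * (\<rho> * (D + ws k))"
      unfolding cc_def \<rho>_def using bet by (simp add: field_simps)
    finally have rec: "\<bar>Rr (Suc k) b s a\<bar> \<le> (1 - cc s a * \<alpha> k) * \<bar>Rr k b s a\<bar> + (cc s a * \<alpha> k) * (\<rho> * (D + ws k))"
      by simp
    have "\<rho> * (D + ws k) \<le> \<rho> * D + \<delta>/2" using wk by (simp add: distrib_left)
    then show ?case using rec t1 by simp
  qed
  have "eventually (\<lambda>k. \<bar>Rr k b s a\<bar> \<le> (\<rho> * D + \<delta>/2) + \<delta>/2) sequentially"
  proof (rule SL[where \<tau>="\<lambda>k. cc s a * \<alpha> k" and v="\<lambda>k. \<rho> * (D + ws k)"])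
    show "\<And>k. 0 \<le> cc s a * \<alpha> k" using cc_pos[of s a] \<alpha>0 by simp
    show "\<not> summable (\<lambda>k. cc s a * \<alpha> k)" using cc_pos[of s a] ns by simp
  qed (use ev3 \<delta> in auto)
  then show ?thesis by (simp only: add.assoc field_sum_of_halves)
qed

lemma box:
  assumes ev: "eventually (\<lambda>k. \<forall>b s a. \<bar>Rr k b s a\<bar> \<le> D) sequentially" and \<delta>: "0 < \<delta>"
  shows "eventually (\<lambda>k. \<forall>b s a. \<bar>Rr k b s a\<bar> \<le> \<rho> * D + \<delta>) sequentially"
proof -
  have "eventually (\<lambda>k. \<forall>i::bool \<times> 's \<times> 'a. \<bar>Rr k (fst i) (fst (snd i)) (snd (snd i))\<bar> \<le> \<rho> * D + \<delta>) sequentially"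
    by (intro eventually_all_finite box1[OF ev \<delta>])
  then show ?thesis by eventually_elim auto
qed

lemma R_lim: "(\<lambda>k. Rr k b s a) \<longlonglongrightarrow> 0"
proof (rule lim0I)
  fix \<epsilon> :: real assume e: "0 < \<epsilon>"
  define Qm where "Qm = (\<Sum>i\<in>UNIV. \<bar>Qs (fst i) (snd i)\<bar>)"
  define D0 where "D0 = Cb + Qm + 1"
  have Qb: "\<bar>Qs s a\<bar> \<le> Qm" for s a
    unfolding Qm_def using member_le_sum[of "(s,a)" UNIV "\<lambda>i. \<bar>Qs (fst i) (snd i)\<bar>"] by auto
  have D00: "0 \<le> D0" unfolding D0_def using Qb[of undefined undefined] Cb(1) by linarith
  have init: "eventually (\<lambda>k. \<forall>b s a. \<bar>Rr k b s a\<bar> \<le> D0) sequentially"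
  proof -
    have "eventually (\<lambda>k. \<bar>ws k\<bar> \<le> 1) sequentially" by (intro lim0D ws_lim) auto
    then show ?thesis
    proof eventually_elim
      case (elim k)
      show ?case
      proof (intro allI)
        fix b s a
        show "\<bar>Rr k b s a\<bar> \<le> D0"
          using Cb(3)[of k b s a] Qb[of s a] W_ws[of b s a k] elim unfolding Rr_def D0_def by linarith
      qed
    qed
  qed
  have iter: "eventually (\<lambda>k. \<forall>b s a. \<bar>Rr k b s a\<bar> \<le> \<rho> ^ n * D0 + \<epsilon>/2) sequentially" for n
  proof (induction n)
    case 0 show ?case using init
    proof eventually_elim
      case (elim k)
      show ?case
      proof (intro allI)
        fix b s a show "\<bar>Rr k b s a\<bar> \<le> \<rho> ^ 0 * D0 + \<epsilon>/2" using elim[rule_format, of b s a] e by simp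
      qed
    qed
  next
    case (Suc n)
    have d: "0 < (1 - \<rho>) * \<epsilon> / 2" using \<rho> e by simp
    have "eventually (\<lambda>k. \<forall>b s a. \<bar>Rr k b s a\<bar> \<le> \<rho> * (\<rho> ^ n * D0 + \<epsilon>/2) + (1 - \<rho>) * \<epsilon> / 2) sequentially"
      by (rule box[OF Suc.IH d])
    moreover have "\<rho> * (\<rho> ^ n * D0 + \<epsilon>/2) + (1 - \<rho>) * \<epsilon> / 2 = \<rho> ^ Suc n * D0 + \<epsilon>/2"
      by (simp add: algebra_simps add_divide_distrib diff_divide_distrib)
    ultimately show ?case by simp
  qed
  have "(\<lambda>n. \<rho> ^ n * D0) \<longlonglongrightarrow> 0"
    using \<rho> by (intro tendsto_mult_left_zero LIMSEQ_power_zero) auto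
  then have "eventually (\<lambda>n. \<bar>\<rho> ^ n * D0\<bar> \<le> \<epsilon>/2) sequentially" using e by (intro lim0D) auto
  then obtain n where n: "\<bar>\<rho> ^ n * D0\<bar> \<le> \<epsilon>/2" unfolding eventually_sequentially by blast
  show "eventually (\<lambda>k. \<bar>Rr k b s a\<bar> \<le> \<epsilon>) sequentially"
    using iter[of n]
  proof eventually_elim
    case (elim k)
    then have "\<bar>Rr k b s a\<bar> \<le> \<rho> ^ n * D0 + \<epsilon>/2" by blast
    then show ?case using n by linarith
  qed
qed

theorem z_lim: "(\<lambda>k. z k b s a) \<longlonglongrightarrow> Qs s a"
proof -
  have "(\<lambda>k. Qs s a + Rr k b s a + (\<Sum>s'\<in>UNIV. Wn b s a s' k)) \<longlonglongrightarrow> Qs s a + 0 + (\<Sum>s'\<in>(UNIV::'s set). 0)"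
    by (intro tendsto_add tendsto_const R_lim tendsto_sum W_lim)
  then show ?thesis unfolding Rr_def by simp
qed

end

definition Tq :: "('s::finite \<Rightarrow> 'a::finite \<Rightarrow> 's pmf) \<Rightarrow> ('s \<Rightarrow> 'a \<Rightarrow> 's \<Rightarrow> real) \<Rightarrow> real \<Rightarrow> ('s,'a) qfun \<Rightarrow> ('s,'a) qfun" where
  "Tq P r \<gamma> Q = (\<lambda>s a. \<Sum>s'\<in>UNIV. pmf (P s a) s' * (r s a s' + \<gamma> * Max (range (Q s'))))"

lemma sumP1: "(\<Sum>s'\<in>UNIV. pmf ((P :: 's::finite \<Rightarrow> 'a \<Rightarrow> 's pmf) s a) s') = 1"
  by (rule sum_pmf_eq_1) auto

lemma T_contr:
  assumes g: "0 \<le> \<gamma>" and E: "\<And>s a. \<bar>Q s a - Q' s a\<bar> \<le> E"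
  shows "\<bar>Tq P r \<gamma> Q s a - Tq P r \<gamma> Q' s a\<bar> \<le> \<gamma> * E"
proof -
  have md: "\<bar>Max (range (Q s')) - Max (range (Q' s'))\<bar> \<le> E" for s' by (rule Max_diff) (rule E)
  have "Tq P r \<gamma> Q s a - Tq P r \<gamma> Q' s a = (\<Sum>s'\<in>UNIV. pmf (P s a) s' * (\<gamma> * (Max (range (Q s')) - Max (range (Q' s')))))"
    unfolding Tq_def by (simp add: sum_subtractf[symmetric] algebra_simps)
  also have "\<bar>\<dots>\<bar> \<le> (\<Sum>s'\<in>UNIV. \<bar>pmf (P s a) s' * (\<gamma> * (Max (range (Q s')) - Max (range (Q' s'))))\<bar>)" by (rule sum_abs)
  also have "\<dots> \<le> (\<Sum>s'\<in>UNIV. pmf (P s a) s' * (\<gamma> * E))"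
    using g by (intro sum_mono) (auto simp: abs_mult intro!: mult_left_mono md)
  also have "\<dots> = \<gamma> * E" by (simp add: sum_distrib_right[symmetric] sumP1)
  finally show ?thesis .
qed

definition nrm :: "('s::finite,'a::finite) qfun \<Rightarrow> real" where
  "nrm Q = (\<Sum>i\<in>UNIV. \<bar>Q (fst i) (snd i)\<bar>)"

lemma nrm_ge: "\<bar>Q s a\<bar> \<le> nrm Q"
  unfolding nrm_def using member_le_sum[of "(s,a)" UNIV "\<lambda>i. \<bar>Q (fst i) (snd i)\<bar>"] by auto

lemma fix_unique:
  assumes g: "0 \<le> \<gamma>" "\<gamma> < 1" and Q: "Tq P r \<gamma> Q = Q" and Q': "Tq P r \<gamma> Q' = Q'"
  shows "Q = Q'"
proof -
  define E where "E = nrm (\<lambda>s a. Q s a - Q' s a)"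
  have b: "\<bar>Q s a - Q' s a\<bar> \<le> \<gamma> ^ n * E" for n s a
  proof (induction n arbitrary: s a)
    case 0 show ?case unfolding E_def using nrm_ge[of "\<lambda>s a. Q s a - Q' s a"] by simp
  next
    case (Suc n)
    have "\<bar>Tq P r \<gamma> Q s a - Tq P r \<gamma> Q' s a\<bar> \<le> \<gamma> * (\<gamma> ^ n * E)" by (rule T_contr[OF g(1) Suc.IH])
    then show ?case using Q Q' by simp
  qed
  have "(\<lambda>n. \<gamma> ^ n * E) \<longlonglongrightarrow> 0" using g by (intro tendsto_mult_left_zero LIMSEQ_power_zero) auto
  then have "\<bar>Q s a - Q' s a\<bar> \<le> 0" for s a using b by (intro LIMSEQ_le_const[where X="\<lambda>n. \<gamma> ^ n * E"]) auto
  then show ?thesis by (auto simp: fun_eq_iff)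
qed

lemma fix_exists:
  fixes P :: "'s::finite \<Rightarrow> 'a::finite \<Rightarrow> 's pmf"
  assumes g: "0 \<le> \<gamma>" "\<gamma> < 1"
  shows "\<exists>Q. Tq P r \<gamma> Q = Q"
proof -
  define Qn where "Qn n = (Tq P r \<gamma> ^^ n) (\<lambda>_ _. 0)" for n
  have QS: "Qn (Suc n) = Tq P r \<gamma> (Qn n)" for n unfolding Qn_def by simp
  define E0 where "E0 = nrm (\<lambda>s a. Qn 1 s a - Qn 0 s a)"
  have E00: "0 \<le> E0" unfolding E0_def nrm_def by (intro sum_nonneg) auto
  have db: "\<bar>Qn (Suc n) s a - Qn n s a\<bar> \<le> \<gamma> ^ n * E0" for n s a
  proof (induction n arbitrary: s a)
    case 0 show ?case unfolding E0_def using nrm_ge[of "\<lambda>s a. Qn 1 s a - Qn 0 s a"] by simp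
  next
    case (Suc n)
    have "\<bar>Tq P r \<gamma> (Qn (Suc n)) s a - Tq P r \<gamma> (Qn n) s a\<bar> \<le> \<gamma> * (\<gamma> ^ n * E0)" by (rule T_contr[OF g(1) Suc.IH])
    then show ?case unfolding QS[of "Suc n"] QS[of n] by simp
  qed
  have sm: "summable (\<lambda>n. Qn (Suc n) s a - Qn n s a)" for s a
  proof (rule summable_comparison_test[where g="\<lambda>n. \<gamma> ^ n * E0"])
    show "\<exists>N. \<forall>n\<ge>N. norm (Qn (Suc n) s a - Qn n s a) \<le> \<gamma> ^ n * E0" using db by auto
    show "summable (\<lambda>n. \<gamma> ^ n * E0)" using g by (intro summable_mult2 summable_geometric) auto
  qed
  define L where "L s a = Qn 0 s a + (\<Sum>n. Qn (Suc n) s a - Qn n s a)" for s a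
  have conv: "(\<lambda>n. Qn n s a) \<longlonglongrightarrow> L s a" for s a
  proof -
    have "(\<lambda>m. Qn 0 s a + (\<Sum>n<m. Qn (Suc n) s a - Qn n s a)) \<longlonglongrightarrow> L s a"
      unfolding L_def by (intro tendsto_add tendsto_const summable_LIMSEQ sm)
    then show ?thesis by (simp add: sum_lessThan_telescope[of "\<lambda>n. Qn n s a"])
  qed
  have "Tq P r \<gamma> L s a = L s a" for s a
  proof -
    have nl: "(\<lambda>n. nrm (\<lambda>s a. L s a - Qn n s a)) \<longlonglongrightarrow> 0"
    proof -
      have "(\<lambda>n. nrm (\<lambda>s a. L s a - Qn n s a)) \<longlonglongrightarrow> (\<Sum>i\<in>(UNIV::('s \<times> 'a) set). \<bar>L (fst i) (snd i) - L (fst i) (snd i)\<bar>)"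
        unfolding nrm_def by (intro tendsto_sum tendsto_rabs tendsto_diff tendsto_const conv)
      then show ?thesis by simp
    qed
    have "(\<lambda>n. Tq P r \<gamma> L s a - Qn (Suc n) s a) \<longlonglongrightarrow> 0"
    proof (rule Lim_null_comparison[where g="\<lambda>n. \<gamma> * nrm (\<lambda>s a. L s a - Qn n s a)"])
      show "eventually (\<lambda>n. norm (Tq P r \<gamma> L s a - Qn (Suc n) s a) \<le> \<gamma> * nrm (\<lambda>s a. L s a - Qn n s a)) sequentially"
        unfolding QS
      proof (intro always_eventually allI)
        fix n
        have "\<bar>Tq P r \<gamma> L s a - Tq P r \<gamma> (Qn n) s a\<bar> \<le> \<gamma> * nrm (\<lambda>s a. L s a - Qn n s a)"
          by (rule T_contr[OF g(1)]) (rule nrm_ge[of "\<lambda>s a. L s a - Qn n s a", simplified])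
        then show "norm (Tq P r \<gamma> L s a - Tq P r \<gamma> (Qn n) s a) \<le> \<gamma> * nrm (\<lambda>s a. L s a - Qn n s a)" by simp
      qed
      show "(\<lambda>n. \<gamma> * nrm (\<lambda>s a. L s a - Qn n s a)) \<longlonglongrightarrow> 0" by (intro tendsto_mult_right_zero nl)
    qed
    then have "(\<lambda>n. Tq P r \<gamma> L s a - (Tq P r \<gamma> L s a - Qn (Suc n) s a)) \<longlonglongrightarrow> Tq P r \<gamma> L s a - 0"
      by (intro tendsto_diff tendsto_const)
    then have "(\<lambda>n. Qn (Suc n) s a) \<longlonglongrightarrow> Tq P r \<gamma> L s a" by simp
    moreover have "(\<lambda>n. Qn (Suc n) s a) \<longlonglongrightarrow> L s a" by (rule LIMSEQ_Suc[OF conv])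
    ultimately show ?thesis by (rule LIMSEQ_unique)
  qed
  then show ?thesis by (intro exI[of _ L]) (auto simp: fun_eq_iff)
qed

lemma Qstar_fix:
  assumes g: "0 \<le> \<gamma>" "\<gamma> < 1"
  shows "\<And>s a. Qstar P r \<gamma> s a = (\<Sum>s'\<in>UNIV. pmf (P s a) s' * (r s a s' + \<gamma> * Max (range (Qstar P r \<gamma> s'))))"
proof -
  obtain Q where Q: "Tq P r \<gamma> Q = Q" using fix_exists[OF g] by blast
  have eq: "(\<forall>s a. Q' s a = (\<Sum>s'\<in>UNIV. pmf (P s a) s' * (r s a s' + \<gamma> * Max (range (Q' s'))))) \<longleftrightarrow> Tq P r \<gamma> Q' = Q'" for Q'
    unfolding Tq_def fun_eq_iff by (blast intro: sym)
  have "Qstar P r \<gamma> = Q"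
    unfolding Qstar_def eq
  proof (rule the_equality)
    show "Tq P r \<gamma> Q = Q" by (rule Q)
    fix Q' assume "Tq P r \<gamma> Q' = Q'" then show "Q' = Q" using fix_unique[OF g _ Q] by blast
  qed
  then have "Qstar P r \<gamma> s a = Tq P r \<gamma> (Qstar P r \<gamma>) s a" for s a using Q by simp
  then show "\<And>s a. Qstar P r \<gamma> s a = (\<Sum>s'\<in>UNIV. pmf (P s a) s' * (r s a s' + \<gamma> * Max (range (Qstar P r \<gamma> s'))))"
    by (simp only: Tq_def)
qed

lemma pmf_bind_fin: "pmf (bind_pmf (N::'b::finite pmf) f) i = (\<Sum>x\<in>UNIV. pmf N x * pmf (f x) i)"
  by (simp add: pmf_bind integral_measure_pmf[where A=UNIV])

lemma pmf_sample: "pmf (sample_pmf p b P) (s, a, s') = pmf p (s::'s::finite) * pmf (b s) (a::'a::finite) * pmf (P s a) s'"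
proof -
  have 1: "pmf (P x y \<bind> (\<lambda>z. return_pmf (x, y, z))) (s, a, s') = (if x = s \<and> y = a then pmf (P s a) s' else 0)" for x y
    by (simp add: pmf_bind_fin pmf_return indicator_def if_distrib cong: if_cong)
  have 2: "pmf (b x \<bind> (\<lambda>y. P x y \<bind> (\<lambda>z. return_pmf (x, y, z)))) (s, a, s') = (if x = s then pmf (b s) a * pmf (P s a) s' else 0)" for x
    by (subst pmf_bind_fin) (simp add: 1 if_distrib cong: if_cong)
  show ?thesis unfolding sample_pmf_def
    by (subst pmf_bind_fin) (simp add: 2 if_distrib cong: if_cong)
qed

theorem theorem4:
  fixes P :: "'s::finite \<Rightarrow> 'a::finite \<Rightarrow> 's pmf"
    and r :: "'s \<Rightarrow> 'a \<Rightarrow> 's \<Rightarrow> real"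
    and \<gamma> \<beta> :: real
    and p :: "'s pmf" and b :: "'s \<Rightarrow> 'a pmf"
    and M :: "'m measure"
    and X :: "nat \<Rightarrow> 'm \<Rightarrow> 's \<times> 'a \<times> 's"
    and \<alpha> :: "nat \<Rightarrow> real"
    and QA0 QB0 :: "'s \<Rightarrow> 'a \<Rightarrow> real"
  assumes gamma: "0 \<le> \<gamma>" "\<gamma> < 1"
    and beta: "\<beta> > 0"
    and M: "prob_space M"
    and meas: "\<And>k. X k \<in> measurable M (count_space UNIV)"
    and indep: "prob_space.indep_vars M (\<lambda>_. count_space UNIV) X UNIV"
    and distr: "\<And>k. distr M (count_space UNIV) (X k) = measure_pmf (sample_pmf p b P)"
    and d_pos: "\<And>s a. pmf p s * pmf (b s) a > 0"
    and step: "\<And>k. 0 \<le> \<alpha> k \<and> \<alpha> k \<le> 1"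
    and not_summable: "\<not> summable \<alpha>"
    and sq_summable: "summable (\<lambda>k. (\<alpha> k)\<^sup>2)"
  shows "AE \<omega> in M. \<forall>s a.
           (\<lambda>k. fst (sgt2 r \<gamma> \<beta> \<alpha> (\<lambda>j. X j \<omega>) QA0 QB0 k) s a) \<longlonglongrightarrow> Qstar P r \<gamma> s a
         \<and> (\<lambda>k. snd (sgt2 r \<gamma> \<beta> \<alpha> (\<lambda>j. X j \<omega>) QA0 QB0 k) s a) \<longlonglongrightarrow> Qstar P r \<gamma> s a"
proof -
  interpret prob_space M by (rule M)
  define q where "q j = pmf (sample_pmf p b P) j" for j
  have qv: "q (s,a,s') = pmf p s * pmf (b s) a * pmf (P s a) s'" for s a s'
    unfolding q_def by (rule pmf_sample)
  have \<alpha>0: "0 \<le> \<alpha> k" for k using step[of k] by simp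
  have \<alpha>lim: "\<alpha> \<longlonglongrightarrow> 0"
  proof (rule lim0I)
    fix \<epsilon> :: real assume e: "0 < \<epsilon>"
    have "(\<lambda>k. (\<alpha> k)\<^sup>2) \<longlonglongrightarrow> 0" by (rule summable_LIMSEQ_zero[OF sq_summable])
    then have "eventually (\<lambda>k. \<bar>(\<alpha> k)\<^sup>2\<bar> \<le> \<epsilon>\<^sup>2) sequentially" using e by (intro lim0D) auto
    then show "eventually (\<lambda>k. \<bar>\<alpha> k\<bar> \<le> \<epsilon>) sequentially"
    proof eventually_elim
      case (elim k)
      then have "(\<alpha> k)\<^sup>2 \<le> \<epsilon>\<^sup>2" by simp
      then have "\<alpha> k \<le> \<epsilon>" by (rule power2_le_imp_le) (use e in auto)
      then show ?case using \<alpha>0[of k] by simp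
    qed
  qed
  have noise_ae: "AE \<omega> in M. \<forall>j. summable (\<lambda>k. \<alpha> k * ((if X k \<omega> = j then 1 else 0) - q j))"
    unfolding AE_all_countable
  proof
    fix j :: "'s \<times> 'a \<times> 's"
    define \<phi> where "\<phi> k x = \<alpha> k * ((if x = j then 1 else 0) - q j)" for k x
    have q01: "0 \<le> q j" "q j \<le> 1" unfolding q_def by (auto simp: pmf_le_1)
    have bnd: "\<bar>\<phi> k x\<bar> \<le> \<alpha> k" for k x
    proof -
      have "\<bar>(if x = j then 1 else 0) - q j\<bar> \<le> 1" using q01 by auto
      then have "\<alpha> k * \<bar>(if x = j then 1 else 0) - q j\<bar> \<le> \<alpha> k * 1" using \<alpha>0[of k] by (intro mult_left_mono)
      moreover have "\<bar>\<phi> k x\<bar> = \<alpha> k * \<bar>(if x = j then 1 else 0) - q j\<bar>" unfolding \<phi>_def using \<alpha>0[of k] by (simp add: abs_mult)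
      ultimately show ?thesis by simp
    qed
    have mean0: "(\<integral>\<omega>. \<phi> k (X k \<omega>) \<partial>M) = 0" for k
    proof -
      have "(\<integral>\<omega>. \<phi> k (X k \<omega>) \<partial>M) = (\<integral>x. \<phi> k x \<partial>(distr M (count_space UNIV) (X k)))"
        by (rule integral_distr[symmetric]) (auto intro: meas)
      also have "\<dots> = (\<integral>x. \<phi> k x \<partial>(measure_pmf (sample_pmf p b P)))" by (simp add: distr)
      also have "\<dots> = (\<Sum>x\<in>UNIV. pmf (sample_pmf p b P) x *\<^sub>R \<phi> k x)"
        by (rule integral_measure_pmf[where A=UNIV]) auto
      also have "\<dots> = (\<Sum>x\<in>UNIV. (if x = j then \<alpha> k * q j else 0) - \<alpha> k * q j * pmf (sample_pmf p b P) x)"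
        by (intro sum.cong) (auto simp: \<phi>_def q_def algebra_simps)
      also have "\<dots> = \<alpha> k * q j - \<alpha> k * q j * (\<Sum>x\<in>UNIV. pmf (sample_pmf p b P) x)"
        by (simp add: sum_subtractf sum_distrib_left)
      also have "(\<Sum>x\<in>UNIV. pmf (sample_pmf p b P) x) = 1" by (rule sum_pmf_eq_1) auto
      finally show ?thesis by simp
    qed
    interpret K: kseq2 M X \<phi> \<alpha>
      by unfold_locales (auto intro: meas indep bnd mean0 sq_summable)
    show "AE \<omega> in M. summable (\<lambda>k. \<alpha> k * ((if X k \<omega> = j then 1 else 0) - q j))"
      using K.ae_summable by (simp add: K.Z_def \<phi>_def)
  qed
  then show ?thesis
  proof (rule AE_mp, intro AE_I2 impI allI)
    fix \<omega> s a
    assume ns: "\<forall>j. summable (\<lambda>k. \<alpha> k * ((if X k \<omega> = j then 1 else 0) - q j))"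
    interpret Q: qdet r \<gamma> \<beta> \<alpha> "\<lambda>j. X j \<omega>" QA0 QB0 P "\<lambda>s a. pmf p s * pmf (b s) a" "Qstar P r \<gamma>"
    proof unfold_locales
      show "\<And>s a s'. summable (\<lambda>k. \<alpha> k * ((if X k \<omega> = (s, a, s') then 1 else 0) - pmf p s * pmf (b s) a * pmf (P s a) s'))"
        using ns by (simp add: qv)
      show "\<And>s a. Qstar P r \<gamma> s a = (\<Sum>s'\<in>UNIV. pmf (P s a) s' * (r s a s' + \<gamma> * Max (range (Qstar P r \<gamma> s'))))"
        by (rule Qstar_fix[OF gamma])
    qed (use gamma beta \<alpha>0 \<alpha>lim not_summable d_pos in auto)
    show "(\<lambda>k. fst (sgt2 r \<gamma> \<beta> \<alpha> (\<lambda>j. X j \<omega>) QA0 QB0 k) s a) \<longlonglongrightarrow> Qstar P r \<gamma> s a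
         \<and> (\<lambda>k. snd (sgt2 r \<gamma> \<beta> \<alpha> (\<lambda>j. X j \<omega>) QA0 QB0 k) s a) \<longlonglongrightarrow> Qstar P r \<gamma> s a"
      using Q.z_lim[of True s a] Q.z_lim[of False s a] by (simp add: Q.z_def)
  qed
qed

end
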